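(* Let $k$ be a field, $A=kQ_A/I_A$ a monomial algebra with vertices $e_1,\dots,e_n$, and $B$ the algebra obtained from $A$ by gluing the distinct non-isolated vertices $e_1,e_n$. Then $$\dim_k\mathrm{Im}(\delta^0_A)=\dim_k\mathrm{Im}(\delta^0_B)+1+c_B-c_A-\mathrm{sp}(1,n).$$ In particular, if $e_1,e_n$ lie in the same block of $A$, then $\dim_k\mathrm{Im}(\delta^0_A)=\dim_k\mathrm{Im}(\delta^0_B)+1-\mathrm{sp}(1,n)$; if they lie in different blocks, then $\dim_k\mathrm{Im}(\delta^0_A)=\dim_k\mathrm{Im}(\delta^0_B)$.
   Context: Monomial algebra: $A=kQ_A/I_A$, $Q_A$ finite quiver, $I_A$ admissible, generated by a minimal set $Z_A$ of paths of length $\ge2$; $\mathcal B_A$: paths (including trivial ones) avoiding $Z_A$ as subpaths, a basis of $A$. Gluing: $B\subseteq A$ generated by $f_1=e_1+e_n$, $f_i=e_i$ ($2\le i\le n-1$) and all arrows; $B\cong kQ_B/I_B$, $Q_B$ obtained from $Q_A$ by identifying $e_1,e_n$ to $f_1$ (arrow $\alpha\mapsto\alpha^*$, path $p=a_m\cdots a_1\mapsto p^*=a_m^*\cdots a_1^*$), $I_B$ generated by $\{r^*:r\in Z_A\}$ and the paths $b^*c^*$ with $b,c$ arrows, $t(c),s(b)\in\{e_1,e_n\}$, $t(c)\ne s(b)$; $\mathcal B_B$ its basis paths. $c_A,c_B$: numbers of connected components of $Q_A,Q_B$; blocks correspond to connected components. For path sets $X,Y$, $k(X\|Y)$ has basis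 the pairs $x\|y$ of parallel paths. For monomial $\Lambda=kQ/\langle Z\rangle$ with basis paths $\mathcal B$, $\delta^0:k(Q_0\|\mathcal B)\to k(Q_1\|\mathcal B)$, $e\|\gamma\mapsto\sum_{a\in Q_1,s(a)=e,a\gamma\in\mathcal B}a\|a\gamma-\sum_{a\in Q_1,t(a)=e,\gamma a\in\mathcal B}a\|\gamma a$; $\delta^0_A,\delta^0_B$ are these for $A,B$. A special path is a path $p\in\mathcal B_A$ from $e_1$ to $e_n$ or from $e_n$ to $e_1$ with $\delta^0_B(f_1\|p^* )\ne0$, equivalently such that $ap\notin I_A$ or $pa\notin I_A$ for some arrow $a$; $\mathrm{sp}(1,n)$ is the number of special paths. *)

theory Defs
  imports Main "HOL.Vector_Spaces" "HOL-Library.Sublist" "HOL-Library.Function_Algebras"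
begin

text \<open>A path is a pair (v, as): its starting vertex v and the list of its arrows in the order
in which they are traversed.  Thus the paper's path a_m...a_1 is (s a_1, [a_1,...,a_m]);
the trivial path at v is (v, []).\<close>

type_synonym ('v, 'e) path = "'v \<times> 'e list"

definition qpath_tgt :: "('e \<Rightarrow> 'v) \<Rightarrow> ('v, 'e) path \<Rightarrow> 'v" where
  "qpath_tgt t p = (if snd p = [] then fst p else t (last (snd p)))"

definition is_qpath :: "'v set \<Rightarrow> 'e set \<Rightarrow> ('e \<Rightarrow> 'v) \<Rightarrow> ('e \<Rightarrow> 'v) \<Rightarrow> ('v, 'e) path \<Rightarrow> bool" where
  "is_qpath Q0 Q1 s t p \<longleftrightarrow>
     fst p \<in> Q0 \<and> set (snd p) \<subseteq> Q1 \<and>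
     (snd p \<noteq> [] \<longrightarrow> s (hd (snd p)) = fst p) \<and>
     (\<forall>i. Suc i < length (snd p) \<longrightarrow> t (snd p ! i) = s (snd p ! Suc i))"

definition quiver :: "'v set \<Rightarrow> 'e set \<Rightarrow> ('e \<Rightarrow> 'v) \<Rightarrow> ('e \<Rightarrow> 'v) \<Rightarrow> bool" where
  "quiver Q0 Q1 s t \<longleftrightarrow> finite Q0 \<and> finite Q1 \<and> (\<forall>a\<in>Q1. s a \<in> Q0 \<and> t a \<in> Q0)"

definition subpath :: "('v, 'e) path \<Rightarrow> ('v, 'e) path \<Rightarrow> bool" where
  "subpath r p \<longleftrightarrow> sublist (snd r) (snd p)"

text \<open>Basis paths of kQ/<Z>: paths avoiding every element of Z as a subpath.\<close>
definition basis_paths :: "'v set \<Rightarrow> 'e set \<Rightarrow> ('e \<Rightarrow> 'v) \<Rightarrow> ('e \<Rightarrow> 'v) \<Rightarrow> ('v, 'e) path set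
    \<Rightarrow> ('v, 'e) path set" where
  "basis_paths Q0 Q1 s t Z = {p. is_qpath Q0 Q1 s t p \<and> (\<forall>r\<in>Z. \<not> subpath r p)}"

text \<open>A monomial algebra kQ/I with I admissible, generated by a minimal set Z of paths of
length at least 2.  Admissibility (I contains all paths of length >= N for some N) is
expressed by: every path of length >= N contains an element of Z.\<close>
definition monomial_presentation ::
  "'v set \<Rightarrow> 'e set \<Rightarrow> ('e \<Rightarrow> 'v) \<Rightarrow> ('e \<Rightarrow> 'v) \<Rightarrow> ('v, 'e) path set \<Rightarrow> bool" where
  "monomial_presentation Q0 Q1 s t Z \<longleftrightarrow>
     quiver Q0 Q1 s t \<and>
     (\<forall>r\<in>Z. is_qpath Q0 Q1 s t r \<and> length (snd r) \<ge> 2) \<and>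
     (\<forall>r\<in>Z. \<forall>r'\<in>Z. subpath r r' \<longrightarrow> r = r') \<and>
     (\<exists>N. \<forall>p. is_qpath Q0 Q1 s t p \<and> length (snd p) \<ge> N \<longrightarrow> (\<exists>r\<in>Z. subpath r p))"

text \<open>Basis of k(Q0 || B): pairs (e, gamma) with gamma a basis path parallel to the trivial
path e, i.e. from e to e.\<close>
definition par0 :: "'v set \<Rightarrow> 'e set \<Rightarrow> ('e \<Rightarrow> 'v) \<Rightarrow> ('e \<Rightarrow> 'v) \<Rightarrow> ('v, 'e) path set
    \<Rightarrow> ('v \<times> ('v, 'e) path) set" where
  "par0 Q0 Q1 s t Z = {(e, \<gamma>). e \<in> Q0 \<and> \<gamma> \<in> basis_paths Q0 Q1 s t Z \<and>
                                fst \<gamma> = e \<and> qpath_tgt t \<gamma> = e}"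

text \<open>delta^0 on a basis element e || gamma, as a vector in k(Q1 || B) represented by its
coordinate function on pairs (a, p).  Here a gamma = (fst gamma, snd gamma @ [a]) and
gamma a = (s a, a # snd gamma).\<close>
definition delta0 :: "'v set \<Rightarrow> 'e set \<Rightarrow> ('e \<Rightarrow> 'v) \<Rightarrow> ('e \<Rightarrow> 'v) \<Rightarrow> ('v, 'e) path set
    \<Rightarrow> 'v \<times> ('v, 'e) path \<Rightarrow> 'e \<times> ('v, 'e) path \<Rightarrow> 'k::ring_1" where
  "delta0 Q0 Q1 s t Z x y =
     (case x of (e, \<gamma>) \<Rightarrow> case y of (a, p) \<Rightarrow>
        (if a \<in> Q1 \<and> s a = e \<and> p = (fst \<gamma>, snd \<gamma> @ [a]) \<and> p \<in> basis_paths Q0 Q1 s t Z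
         then 1 else 0)
      - (if a \<in> Q1 \<and> t a = e \<and> p = (s a, a # snd \<gamma>) \<and> p \<in> basis_paths Q0 Q1 s t Z
         then 1 else 0))"

definition fscale :: "'k::field \<Rightarrow> ('x \<Rightarrow> 'k) \<Rightarrow> ('x \<Rightarrow> 'k)" where
  "fscale c f = (\<lambda>x. c * f x)"

definition dim_im_delta0 :: "'k::field itself \<Rightarrow> 'v set \<Rightarrow> 'e set \<Rightarrow> ('e \<Rightarrow> 'v) \<Rightarrow> ('e \<Rightarrow> 'v)
    \<Rightarrow> ('v, 'e) path set \<Rightarrow> nat" where
  "dim_im_delta0 (K :: 'k itself) Q0 Q1 s t Z =
     vector_space.dim (fscale :: 'k \<Rightarrow> _)
       ((\<lambda>x. (delta0 Q0 Q1 s t Z x :: _ \<Rightarrow> 'k)) ` par0 Q0 Q1 s t Z)"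

definition conn_rel :: "'e set \<Rightarrow> ('e \<Rightarrow> 'v) \<Rightarrow> ('e \<Rightarrow> 'v) \<Rightarrow> ('v \<times> 'v) set" where
  "conn_rel Q1 s t = ({(s a, t a) | a. a \<in> Q1} \<union> {(t a, s a) | a. a \<in> Q1})\<^sup>*"

definition ncomp :: "'v set \<Rightarrow> 'e set \<Rightarrow> ('e \<Rightarrow> 'v) \<Rightarrow> ('e \<Rightarrow> 'v) \<Rightarrow> nat" where
  "ncomp Q0 Q1 s t = card (Q0 // conn_rel Q1 s t)"

text \<open>Gluing v1 and vn: vn is identified with v1 (which plays the role of f_1).\<close>
definition glue :: "'v \<Rightarrow> 'v \<Rightarrow> 'v \<Rightarrow> 'v" where
  "glue v1 vn x = (if x = vn then v1 else x)"

definition glue_rels :: "'e set \<Rightarrow> ('e \<Rightarrow> 'v) \<Rightarrow> ('e \<Rightarrow> 'v) \<Rightarrow> ('v, 'e) path set \<Rightarrow> 'v \<Rightarrow> 'v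
    \<Rightarrow> ('v, 'e) path set" where
  "glue_rels Q1 s t Z v1 vn =
     {(glue v1 vn (fst r), snd r) | r. r \<in> Z} \<union>
     {(glue v1 vn (s c), [c, b]) | b c. b \<in> Q1 \<and> c \<in> Q1 \<and> t c \<in> {v1, vn} \<and>
                                      s b \<in> {v1, vn} \<and> t c \<noteq> s b}"

text \<open>Special paths: basis paths p of A from v1 to vn or from vn to v1 with
delta^0_B(f_1 || p*) nonzero (the coefficients are 0, 1, -1; computed in int).\<close>
definition special_paths :: "'v set \<Rightarrow> 'e set \<Rightarrow> ('e \<Rightarrow> 'v) \<Rightarrow> ('e \<Rightarrow> 'v) \<Rightarrow> ('v, 'e) path set
    \<Rightarrow> 'v \<Rightarrow> 'v \<Rightarrow> ('v, 'e) path set" where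
  "special_paths Q0 Q1 s t Z v1 vn =
     {p \<in> basis_paths Q0 Q1 s t Z.
        ((fst p = v1 \<and> qpath_tgt t p = vn) \<or> (fst p = vn \<and> qpath_tgt t p = v1)) \<and>
        (delta0 (glue v1 vn ` Q0) Q1 (glue v1 vn \<circ> s) (glue v1 vn \<circ> t)
            (glue_rels Q1 s t Z v1 vn) (v1, (v1, snd p)) :: _ \<Rightarrow> int) \<noteq> 0}"

end

theory Submission
  imports Defs
begin

lemma vs_fscale: "vector_space (fscale :: 'k::field \<Rightarrow> ('x \<Rightarrow> 'k) \<Rightarrow> ('x \<Rightarrow> 'k))"
  by unfold_locales (auto simp: fscale_def fun_eq_iff algebra_simps)

interpretation fs: vector_space "fscale :: 'k::field \<Rightarrow> ('x \<Rightarrow> 'k) \<Rightarrow> ('x \<Rightarrow> 'k)"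
  by (rule vs_fscale)

lemma sum_fun_apply: "(sum f S) x = sum (\<lambda>v. f v x) S"
  by (induction S rule: infinite_finite_induct) auto

lemma span_vanish:
  fixes S :: "('x \<Rightarrow> 'k::field) set"
  assumes "\<And>v x. v \<in> S \<Longrightarrow> x \<in> P \<Longrightarrow> v x = 0" "y \<in> fs.span S" "x \<in> P"
  shows "y x = 0"
proof -
  have "fs.subspace {y::'x\<Rightarrow>'k. \<forall>x\<in>P. y x = 0}"
    unfolding fs.subspace_def by (auto simp: fscale_def)
  then have "fs.span S \<subseteq> {y. \<forall>x\<in>P. y x = 0}" using assms(1) by (intro fs.span_minimal) auto
  then show ?thesis using assms(2,3) by auto
qed

lemma dim_union_supp:
  fixes S T :: "('x \<Rightarrow> 'k::field) set"
  assumes fin: "finite S" "finite T"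
    and sS: "\<And>v x. v \<in> S \<Longrightarrow> x \<notin> P \<Longrightarrow> v x = 0"
    and sT: "\<And>v x. v \<in> T \<Longrightarrow> x \<in> P \<Longrightarrow> v x = 0"
  shows "fs.dim (S \<union> T) = fs.dim S + fs.dim T"
proof -
  obtain BS where BS: "BS \<subseteq> S" "fs.independent BS" "S \<subseteq> fs.span BS" "card BS = fs.dim S"
    using fs.basis_exists[of S] by blast
  obtain BT where BT: "BT \<subseteq> T" "fs.independent BT" "T \<subseteq> fs.span BT" "card BT = fs.dim T"
    using fs.basis_exists[of T] by blast
  have finB: "finite BS" "finite BT" using BS(1) BT(1) fin finite_subset by auto
  have disj: "BS \<inter> BT = {}"
  proof (rule ccontr)
    assume "BS \<inter> BT \<noteq> {}"
    then obtain v where v: "v \<in> BS" "v \<in> BT" by auto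
    have "v = 0"
    proof
      fix x show "v x = 0 x"
        using sS[of v x] sT[of v x] v BS(1) BT(1) by (cases "x \<in> P") auto
    qed
    then show False using v BS(2) fs.dependent_zero by blast
  qed
  have ind: "fs.independent (BS \<union> BT)"
    unfolding fs.independent_explicit_finite_subsets
  proof (intro allI impI ballI)
    fix U u v
    assume U: "U \<subseteq> BS \<union> BT" "finite U" and sum0: "(\<Sum>v\<in>U. fscale (u v) v) = 0" and vU: "v \<in> U"
    define U1 where "U1 = U \<inter> BS"
    define U2 where "U2 = U - BS"
    have U12: "U = U1 \<union> U2" "U1 \<inter> U2 = {}" "finite U1" "finite U2" "U1 \<subseteq> BS" "U2 \<subseteq> BT"
      using U by (auto simp: U1_def U2_def)
    define f1 where "f1 = (\<Sum>v\<in>U1. fscale (u v) v)"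
    define f2 where "f2 = (\<Sum>v\<in>U2. fscale (u v) v)"
    have "f1 + f2 = 0" using sum0 U12 unfolding f1_def f2_def
      by (metis sum.union_disjoint)
    have f1out: "f1 x = 0" if "x \<notin> P" for x
      unfolding f1_def sum_fun_apply fscale_def
      using sS[OF _ that] U12(5) BS(1) by (intro sum.neutral) auto
    have f2in: "f2 x = 0" if "x \<in> P" for x
      unfolding f2_def sum_fun_apply fscale_def
      using sT[OF _ that] U12(6) BT(1) by (intro sum.neutral) auto
    have f1z: "f1 = 0"
    proof
      fix x
      have "f1 x + f2 x = 0" using \<open>f1 + f2 = 0\<close> by (metis plus_fun_apply zero_fun_apply)
      then show "f1 x = 0 x" using f1out f2in by (cases "x \<in> P") auto
    qed
    then have f2z: "f2 = 0" using \<open>f1 + f2 = 0\<close> by simp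
    show "u v = 0"
    proof (cases "v \<in> U1")
      case True
      then show ?thesis using BS(2) U12(3,5) f1z unfolding f1_def fs.independent_explicit_finite_subsets
        by blast
    next
      case False
      then have "v \<in> U2" using vU U12(1) by auto
      then show ?thesis using BT(2) U12(4,6) f2z unfolding f2_def fs.independent_explicit_finite_subsets
        by blast
    qed
  qed
  have sp: "fs.span (BS \<union> BT) = fs.span (S \<union> T)"
    unfolding fs.span_eq
  proof
    show "BS \<union> BT \<subseteq> fs.span (S \<union> T)" using BS(1) BT(1) fs.span_superset by blast
    show "S \<union> T \<subseteq> fs.span (BS \<union> BT)" using BS(3) BT(3) fs.span_mono[of BS "BS \<union> BT"]
      fs.span_mono[of BT "BS \<union> BT"] by blast
  qed
  have "fs.dim (S \<union> T) = card (BS \<union> BT)" by (rule fs.dim_eq_card[OF sp ind])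
  also have "\<dots> = card BS + card BT" using card_Un_disjoint[OF finB disj] .
  finally show ?thesis using BS(4) BT(4) by simp
qed

lemma dim_disj:
  fixes T :: "('x \<Rightarrow> 'k::field) set"
  assumes "0 \<notin> T" "\<And>u w x. u \<in> T \<Longrightarrow> w \<in> T \<Longrightarrow> u \<noteq> w \<Longrightarrow> u x = 0 \<or> w x = 0"
  shows "fs.dim T = card T"
proof -
  have "fs.independent T"
    unfolding fs.independent_explicit_finite_subsets
  proof (intro allI impI ballI)
    fix U u w
    assume U: "U \<subseteq> T" "finite U" and sum0: "(\<Sum>v\<in>U. fscale (u v) v) = 0" and wU: "w \<in> U"
    have "w \<noteq> 0" using assms(1) wU U by auto
    then obtain x where x: "w x \<noteq> 0" by (auto simp: fun_eq_iff)
    have "0 = (\<Sum>v\<in>U. fscale (u v) v) x" using sum0 by simp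
    also have "\<dots> = (\<Sum>v\<in>U. u v * v x)" by (simp add: sum_fun_apply fscale_def)
    also have "\<dots> = u w * w x + (\<Sum>v\<in>U - {w}. u v * v x)" using U(2) wU by (simp add: sum.remove)
    also have "(\<Sum>v\<in>U - {w}. u v * v x) = 0"
      using assms(2)[of w _ x] x U wU by (intro sum.neutral) auto
    finally show "u w = 0" using x by simp
  qed
  then show ?thesis by (rule fs.dim_eq_card_independent)
qed

lemma linear_comp:
  fixes h :: "'y \<Rightarrow> 'x"
  shows "Vector_Spaces.linear (fscale :: 'k::field \<Rightarrow> ('x \<Rightarrow> 'k) \<Rightarrow> _) (fscale :: 'k \<Rightarrow> ('y \<Rightarrow> 'k) \<Rightarrow> _) (\<lambda>f. f \<circ> h)"
proof -
  have "vector_space (fscale :: 'k \<Rightarrow> ('x\<Rightarrow>'k) \<Rightarrow> _)" "vector_space (fscale :: 'k \<Rightarrow> ('y\<Rightarrow>'k) \<Rightarrow> _)"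
    by (rule vs_fscale)+
  moreover have "\<forall>(x::'x\<Rightarrow>'k) (y::'x\<Rightarrow>'k). (x + y) \<circ> h = (x \<circ> h) + (y \<circ> h)" by (auto simp: fun_eq_iff)
  moreover have "\<forall>c (x::'x\<Rightarrow>'k). fscale c x \<circ> h = fscale c (x \<circ> h)" by (auto simp: fun_eq_iff fscale_def)
  ultimately show ?thesis by (simp add: linear_iff)
qed

lemma dim_comp:
  fixes S :: "('x \<Rightarrow> 'k::field) set" and h :: "'y \<Rightarrow> 'x"
  assumes "\<And>v x. v \<in> S \<Longrightarrow> v x \<noteq> 0 \<Longrightarrow> x \<in> range h"
  shows "fs.dim ((\<lambda>f. f \<circ> h) ` S) = fs.dim S"
proof -
  interpret vp: vector_space_pair "fscale :: 'k \<Rightarrow> ('x \<Rightarrow> 'k) \<Rightarrow> _" "fscale :: 'k \<Rightarrow> ('y \<Rightarrow> 'k) \<Rightarrow> _"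
    by unfold_locales
  let ?F = "\<lambda>f::'x\<Rightarrow>'k. f \<circ> h"
  have lf: "Vector_Spaces.linear (fscale :: 'k \<Rightarrow> ('x \<Rightarrow> 'k) \<Rightarrow> _) (fscale :: 'k \<Rightarrow> ('y \<Rightarrow> 'k) \<Rightarrow> _) ?F"
    by (rule linear_comp)
  have fi: "inj_on ?F (fs.span S)"
  proof (rule inj_onI)
    fix f g assume f: "f \<in> fs.span S" and g: "g \<in> fs.span S" and eq: "f \<circ> h = g \<circ> h"
    show "f = g"
    proof
      fix x
      show "f x = g x"
      proof (cases "x \<in> range h")
        case True then show ?thesis using eq by (auto simp: fun_eq_iff)
      next
        case False
        have "f x = 0" using span_vanish[of S "- range h" f x] assms f False by blast
        moreover have "g x = 0" using span_vanish[of S "- range h" g x] assms g False by blast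
        ultimately show ?thesis by simp
      qed
    qed
  qed
  obtain B where B: "B \<subseteq> S" "fs.independent B" "S \<subseteq> fs.span B" "card B = fs.dim S"
    using fs.basis_exists[of S] by blast
  then have "fs.span S = fs.span B"
    using fs.span_mono[of B S] fs.span_mono[of S "fs.span B"] fs.span_span[of B] by auto
  moreover have "card (?F ` B) = card B"
    using card_image[of ?F B] inj_on_subset[of ?F "fs.span S" B] B fs.span_superset fi by auto
  moreover have "(?F ` B) \<subseteq> (?F ` S)"
    using B by auto
  ultimately show ?thesis
    by (metis B(2) B(4) fi lf vp.linear_dependent_inj_imageD vp.linear_span_image fs.dim_eq_card_independent fs.dim_span)
qed


lemma dim_push:
  fixes S :: "('x \<Rightarrow> 'k::field) set" and h :: "'y \<Rightarrow> 'x" and D :: "'y \<Rightarrow> bool"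
  assumes supp: "\<And>v x. v \<in> S \<Longrightarrow> v x \<noteq> 0 \<Longrightarrow> x \<in> h ` Collect D"
  shows "fs.dim ((\<lambda>f y. if D y then f (h y) else 0) ` S) = fs.dim S"
proof -
  interpret vp: vector_space_pair "fscale :: 'k \<Rightarrow> ('x \<Rightarrow> 'k) \<Rightarrow> _" "fscale :: 'k \<Rightarrow> ('y \<Rightarrow> 'k) \<Rightarrow> _"
    by unfold_locales
  let ?F = "\<lambda>(f::'x\<Rightarrow>'k) y. if D y then f (h y) else 0"
  have lf: "Vector_Spaces.linear (fscale :: 'k \<Rightarrow> ('x \<Rightarrow> 'k) \<Rightarrow> _) (fscale :: 'k \<Rightarrow> ('y \<Rightarrow> 'k) \<Rightarrow> _) ?F"
  proof -
    have "vector_space (fscale :: 'k \<Rightarrow> ('x\<Rightarrow>'k) \<Rightarrow> _)" "vector_space (fscale :: 'k \<Rightarrow> ('y\<Rightarrow>'k) \<Rightarrow> _)"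
      by (rule vs_fscale)+
    moreover have "\<forall>(x::'x\<Rightarrow>'k) (y::'x\<Rightarrow>'k). ?F (x + y) = ?F x + ?F y" by (auto simp: fun_eq_iff)
    moreover have "\<forall>c (x::'x\<Rightarrow>'k). ?F (fscale c x) = fscale c (?F x)" by (auto simp: fun_eq_iff fscale_def)
    ultimately show ?thesis by (simp add: linear_iff)
  qed
  have fi: "inj_on ?F (fs.span S)"
  proof (rule inj_onI)
    fix f g assume f: "f \<in> fs.span S" and g: "g \<in> fs.span S" and eq: "?F f = ?F g"
    show "f = g"
    proof
      fix x
      show "f x = g x"
      proof (cases "x \<in> h ` Collect D")
        case True
        then obtain y where "D y" "x = h y" by auto
        then show ?thesis using eq by (auto simp: fun_eq_iff dest: spec[of _ y])
      next
        case False
        have "f x = 0" using span_vanish[of S "- (h ` Collect D)" f x] supp f False by blast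
        moreover have "g x = 0" using span_vanish[of S "- (h ` Collect D)" g x] supp g False by blast
        ultimately show ?thesis by simp
      qed
    qed
  qed
  obtain B where B: "B \<subseteq> S" "fs.independent B" "S \<subseteq> fs.span B" "card B = fs.dim S"
    using fs.basis_exists[of S] by blast
  have spSB: "fs.span S = fs.span B"
    using B fs.span_mono[of B S] fs.span_mono[of S "fs.span B"] fs.span_span[of B] by auto
  have fiB: "inj_on ?F (fs.span B)" using fi spSB by simp
  have cardB: "card (?F ` B) = card B"
    using card_image[of ?F B] inj_on_subset[of ?F "fs.span S" B] B(1) fs.span_superset fi by auto
  have indB: "fs.independent (?F ` B)"
    by (rule vp.linear_independent_injective_image[OF lf B(2) fiB])
  have sp: "fs.span (?F ` B) = fs.span (?F ` S)"
    using vp.linear_span_image[OF lf, of B] vp.linear_span_image[OF lf, of S] spSB by simp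
  have "fs.dim (?F ` S) = card (?F ` B)" by (rule fs.dim_eq_card[OF sp indB])
  then show ?thesis using cardB B(4) by simp
qed

lemma dim_insert_gen:
  fixes W :: "('x \<Rightarrow> 'k::field) set"
  assumes fin: "finite W"
  shows "fs.dim (insert x W) = (if x \<in> fs.span W then fs.dim W else fs.dim W + 1)"
proof (cases "x \<in> fs.span W")
  case True
  then have "fs.span (insert x W) = fs.span W" by (rule fs.span_redundant)
  then show ?thesis using True by (metis fs.dim_span)
next
  case False
  obtain B where B: "B \<subseteq> W" "fs.independent B" "W \<subseteq> fs.span B" "card B = fs.dim W"
    using fs.basis_exists[of W] by blast
  have spB: "fs.span B = fs.span W"
    using B fs.span_mono[of B W] fs.span_mono[of W "fs.span B"] fs.span_span[of B] by auto
  have xB: "x \<notin> fs.span B" using False spB by simp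
  have ind: "fs.independent (insert x B)" by (rule fs.independent_insertI[OF xB B(2)])
  have sp: "fs.span (insert x B) = fs.span (insert x W)"
    unfolding fs.span_eq
  proof
    show "insert x B \<subseteq> fs.span (insert x W)" using B(1) fs.span_superset by blast
    show "insert x W \<subseteq> fs.span (insert x B)"
      using B(3) fs.span_mono[of B "insert x B"] fs.span_superset[of "insert x B"] by blast
  qed
  have finB: "finite B" using B(1) fin finite_subset by blast
  have "x \<notin> B" using xB fs.span_superset by blast
  then have "fs.dim (insert x W) = card B + 1" using fs.dim_eq_card[OF sp ind] finB by simp
  then show ?thesis using False B(4) by simp
qed


lemma sublist2: "sublist [c,b] l \<longleftrightarrow> (\<exists>i. Suc i < length l \<and> l!i = c \<and> l!Suc i = b)"
proof
  assume "sublist [c,b] l"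
  then obtain ps ss where "l = ps @ [c,b] @ ss" by (auto simp: sublist_def)
  then show "\<exists>i. Suc i < length l \<and> l!i = c \<and> l!Suc i = b"
    by (intro exI[of _ "length ps"]) (auto simp: nth_append)
next
  assume "\<exists>i. Suc i < length l \<and> l!i = c \<and> l!Suc i = b"
  then obtain i where i: "Suc i < length l" "l!i = c" "l!Suc i = b" by blast
  have "l = take i l @ drop i l" by simp
  also have "drop i l = l!i # drop (Suc i) l" using i by (metis Cons_nth_drop_Suc Suc_lessD)
  also have "drop (Suc i) l = l!Suc i # drop (Suc (Suc i)) l" using i by (metis Cons_nth_drop_Suc)
  finally have "l = take i l @ [c,b] @ drop (Suc (Suc i)) l" using i by simp
  then show "sublist [c,b] l" unfolding sublist_def by blast
qed

lemma short_not_sub: "2 \<le> length xs \<Longrightarrow> length l \<le> 1 \<Longrightarrow> \<not> sublist xs l"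
  using sublist_length_le by fastforce

locale GS =
  fixes Q0 :: "'v set" and Q1 :: "'e set" and s t :: "'e \<Rightarrow> 'v"
    and Z :: "('v, 'e) path set" and v1 vn :: 'v
  assumes mp: "monomial_presentation Q0 Q1 s t Z"
    and v1Q: "v1 \<in> Q0" and vnQ: "vn \<in> Q0" and neq: "v1 \<noteq> vn"
begin

abbreviation "g \<equiv> glue v1 vn"
abbreviation "BA \<equiv> basis_paths Q0 Q1 s t Z"
abbreviation "ZB \<equiv> glue_rels Q1 s t Z v1 vn"
abbreviation "BB \<equiv> basis_paths (g ` Q0) Q1 (g \<circ> s) (g \<circ> t) ZB"

definition bp :: "'e list \<Rightarrow> bool" where
  "bp l \<longleftrightarrow> l \<noteq> [] \<and> (s (hd l), l) \<in> BA"

lemma quiv: "finite Q0" "finite Q1" "a \<in> Q1 \<Longrightarrow> s a \<in> Q0" "a \<in> Q1 \<Longrightarrow> t a \<in> Q0"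
  using mp unfolding monomial_presentation_def quiver_def by auto

lemma Zlen: "r \<in> Z \<Longrightarrow> 2 \<le> length (snd r)"
  using mp unfolding monomial_presentation_def by auto

lemma g_eq: "g x = g y \<longleftrightarrow> x = y \<or> (x \<in> {v1,vn} \<and> y \<in> {v1,vn})"
  using neq by (auto simp: glue_def)

lemma g_v: "g vn = v1" "g v1 = v1" "x \<noteq> vn \<Longrightarrow> g x = x"
  by (auto simp: glue_def)

lemma gQ0: "g ` Q0 = Q0 - {vn}"
  using v1Q neq by (auto simp: glue_def image_iff)

lemma ZB_avoid: "(\<forall>r\<in>ZB. \<not> sublist (snd r) l) \<longleftrightarrow>
   (\<forall>r\<in>Z. \<not> sublist (snd r) l) \<and>
   (\<forall>b c. b \<in> Q1 \<longrightarrow> c \<in> Q1 \<longrightarrow> t c \<in> {v1,vn} \<longrightarrow> s b \<in> {v1,vn} \<longrightarrow> t c \<noteq> s b \<longrightarrow> \<not> sublist [c,b] l)"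
proof -
  have "ZB = {(g (fst r), snd r) | r. r \<in> Z} \<union>
     {(g (s c), [c, b]) | b c. b \<in> Q1 \<and> c \<in> Q1 \<and> t c \<in> {v1, vn} \<and> s b \<in> {v1, vn} \<and> t c \<noteq> s b}"
    by (simp add: glue_rels_def)
  then show ?thesis by fastforce
qed

lemma ZBlen: "r \<in> ZB \<Longrightarrow> 2 \<le> length (snd r)"
  unfolding glue_rels_def using Zlen by auto

lemma BA_nil: "(v,[]) \<in> BA \<longleftrightarrow> v \<in> Q0"
proof -
  have "\<not> sublist (snd r) []" if "r \<in> Z" for r using Zlen[OF that] by auto
  then show ?thesis unfolding basis_paths_def is_qpath_def subpath_def by auto
qed

lemma BB_nil: "(v,[]) \<in> BB \<longleftrightarrow> v \<in> g ` Q0"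
proof -
  have "\<not> sublist (snd r) []" if "r \<in> ZB" for r using ZBlen[OF that] by auto
  then show ?thesis unfolding basis_paths_def is_qpath_def subpath_def by auto
qed

lemma BA_cons: "l \<noteq> [] \<Longrightarrow> (v,l) \<in> BA \<longleftrightarrow> v = s (hd l) \<and> bp l"
  unfolding bp_def basis_paths_def is_qpath_def by auto

lemma bp_unfold: "bp l \<longleftrightarrow> l \<noteq> [] \<and> set l \<subseteq> Q1 \<and>
    (\<forall>i. Suc i < length l \<longrightarrow> t (l ! i) = s (l ! Suc i)) \<and> (\<forall>r\<in>Z. \<not> sublist (snd r) l)"
proof -
  have "l \<noteq> [] \<Longrightarrow> set l \<subseteq> Q1 \<Longrightarrow> s (hd l) \<in> Q0" using quiv(3) by (cases l) auto
  then show ?thesis unfolding bp_def basis_paths_def is_qpath_def subpath_def by auto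
qed

lemma BB_cons: "l \<noteq> [] \<Longrightarrow> (v,l) \<in> BB \<longleftrightarrow> v = g (s (hd l)) \<and> bp l"
proof -
  assume ln: "l \<noteq> []"
  have BB_unf: "(v,l) \<in> BB \<longleftrightarrow> v \<in> g ` Q0 \<and> set l \<subseteq> Q1 \<and> g (s (hd l)) = v \<and>
      (\<forall>i. Suc i < length l \<longrightarrow> g (t (l!i)) = g (s (l ! Suc i))) \<and> (\<forall>r\<in>ZB. \<not> sublist (snd r) l)"
    using ln unfolding basis_paths_def is_qpath_def subpath_def mem_Collect_eq fst_conv snd_conv comp_apply
    by simp
  show ?thesis
  proof
    assume B: "(v,l) \<in> BB"
    note u = BB_unf[THEN iffD1, OF B]
    have sl: "set l \<subseteq> Q1" using u by blast
    have av: "\<forall>r\<in>ZB. \<not> sublist (snd r) l" using u by blast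
    have vv: "v = g (s (hd l))" using u by auto
    have cons: "\<forall>i. Suc i < length l \<longrightarrow> g (t (l!i)) = g (s (l ! Suc i))"
      using u by blast
    have cons': "t (l ! i) = s (l ! Suc i)" if i: "Suc i < length l" for i
    proof (rule ccontr)
      assume ne: "t (l ! i) \<noteq> s (l ! Suc i)"
      have "g (t (l!i)) = g (s (l ! Suc i))" using cons i by blast
      then have "t (l!i) \<in> {v1,vn}" "s (l ! Suc i) \<in> {v1,vn}" using ne g_eq[of "t (l!i)" "s (l ! Suc i)"] by auto
      moreover have "l!i \<in> Q1" "l ! Suc i \<in> Q1" using sl i by auto
      moreover have "sublist [l!i, l!Suc i] l" unfolding sublist2 using i by (intro exI[of _ i]) simp
      moreover have "\<forall>b c. b \<in> Q1 \<longrightarrow> c \<in> Q1 \<longrightarrow> t c \<in> {v1,vn} \<longrightarrow> s b \<in> {v1,vn} \<longrightarrow> t c \<noteq> s b \<longrightarrow> \<not> sublist [c,b] l"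
        using av unfolding ZB_avoid by blast
      ultimately show False using ne by blast
    qed
    have avZ: "\<forall>r\<in>Z. \<not> sublist (snd r) l" using av unfolding ZB_avoid by blast
    have "bp l" unfolding bp_unfold using sl cons' avZ ln by blast
    then show "v = g (s (hd l)) \<and> bp l" using vv by blast
  next
    assume A: "v = g (s (hd l)) \<and> bp l"
    then have sl: "set l \<subseteq> Q1" and cons: "\<forall>i. Suc i < length l \<longrightarrow> t (l ! i) = s (l ! Suc i)"
      and avZ: "\<forall>r\<in>Z. \<not> sublist (snd r) l" unfolding bp_unfold by auto
    have "s (hd l) \<in> Q0" using sl ln quiv(3) by (cases l) auto
    then have c1: "v \<in> g ` Q0" using A by blast
    have c2: "\<not> sublist [c,b] l" if "t c \<noteq> s b" for b c
      using cons that unfolding sublist2 by blast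
    have c3: "\<forall>r\<in>ZB. \<not> sublist (snd r) l" unfolding ZB_avoid using avZ c2 by blast
    have c4: "\<forall>i. Suc i < length l \<longrightarrow> g (t (l!i)) = g (s (l ! Suc i))" using cons by simp
    have "v \<in> g ` Q0 \<and> set l \<subseteq> Q1 \<and> g (s (hd l)) = v \<and>
      (\<forall>i. Suc i < length l \<longrightarrow> g (t (l!i)) = g (s (l ! Suc i))) \<and> (\<forall>r\<in>ZB. \<not> sublist (snd r) l)"
      using A sl c1 c3 c4 by auto
    then show "(v,l) \<in> BB" by (rule BB_unf[THEN iffD2])
  qed
qed

lemma bp_snoc: "bp (l @ [a]) \<Longrightarrow> l \<noteq> [] \<Longrightarrow> s a = t (last l) \<and> a \<in> Q1"
proof -
  assume b: "bp (l @ [a])" and ln: "l \<noteq> []"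
  have "t ((l@[a]) ! (length l - 1)) = s ((l@[a]) ! Suc (length l - 1))"
    using b ln unfolding bp_unfold by (metis Suc_pred' length_append_singleton length_greater_0_conv lessI)
  then have "t (last l) = s a" using ln by (simp add: nth_append last_conv_nth)
  then show ?thesis using b unfolding bp_unfold by auto
qed

lemma bp_cons: "bp (a # l) \<Longrightarrow> l \<noteq> [] \<Longrightarrow> t a = s (hd l) \<and> a \<in> Q1"
proof -
  assume b: "bp (a # l)" and ln: "l \<noteq> []"
  have "t ((a#l) ! 0) = s ((a#l) ! Suc 0)"
    using b ln unfolding bp_unfold by (metis length_Cons length_greater_0_conv Suc_less_eq)
  then show ?thesis using b ln unfolding bp_unfold by (simp add: hd_conv_nth)
qed

lemma bp_single: "bp [a] \<longleftrightarrow> a \<in> Q1"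
proof -
  have "\<not> sublist (snd r) [a]" if "r \<in> Z" for r using Zlen[OF that] short_not_sub[of "snd r" "[a]"] by simp
  then show ?thesis unfolding bp_unfold by auto
qed

lemma bp_Q1: "bp l \<Longrightarrow> set l \<subseteq> Q1" unfolding bp_unfold by auto

end

context GS begin

definition chi :: "'v \<Rightarrow> 'e \<times> ('v \<times> 'e list) \<Rightarrow> 'k::ring_1" where
  "chi v y = (case y of (a,(w,l)) \<Rightarrow> if a \<in> Q1 \<and> l = [a] \<and> w = s a
     then (if s a = v then 1 else 0) - (if t a = v then 1 else 0) else 0)"

definition chiB :: "'v \<Rightarrow> 'e \<times> ('v \<times> 'e list) \<Rightarrow> 'k::ring_1" where
  "chiB v y = (case y of (a,(w,l)) \<Rightarrow> if a \<in> Q1 \<and> l = [a] \<and> w = g (s a)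
     then (if g (s a) = v then 1 else 0) - (if g (t a) = v then 1 else 0) else 0)"

definition rho :: "'e list \<Rightarrow> 'e \<times> ('v \<times> 'e list) \<Rightarrow> 'k::ring_1" where
  "rho l y = (case y of (a,(w,l')) \<Rightarrow>
     (if l' = l @ [a] \<and> w = s (hd l) \<and> bp (l @ [a]) then 1 else 0)
   - (if l' = a # l \<and> w = s a \<and> bp (a # l) then 1 else 0))"

definition DD :: "'e \<times> ('v \<times> 'e list) \<Rightarrow> bool" where
  "DD y = (case y of (a,(w,l)) \<Rightarrow> l \<noteq> [] \<and> w = g (s (hd l)))"

definition hh :: "'e \<times> ('v \<times> 'e list) \<Rightarrow> 'e \<times> ('v \<times> 'e list)" where
  "hh y = (case y of (a,(w,l)) \<Rightarrow> (a,(s (hd l), l)))"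

definition Fm :: "('e \<times> ('v \<times> 'e list) \<Rightarrow> 'k::ring_1) \<Rightarrow> 'e \<times> ('v \<times> 'e list) \<Rightarrow> 'k" where
  "Fm f = (\<lambda>y. if DD y then f (hh y) else 0)"

lemma bp_ne: "bp l \<Longrightarrow> l \<noteq> []" unfolding bp_def by auto

lemma bp_Q0: "bp l \<Longrightarrow> s (hd l) \<in> Q0 \<and> t (last l) \<in> Q0"
proof -
  assume b: "bp l"
  then have "hd l \<in> Q1" "last l \<in> Q1" using bp_Q1[OF b] bp_ne[OF b] by auto
  then show ?thesis using quiv by auto
qed

lemma ite_diff_cong: "(P \<longleftrightarrow> P') \<Longrightarrow> (Q \<longleftrightarrow> Q') \<Longrightarrow>
  (if P then (1::'a::ring_1) else 0) - (if Q then 1 else 0) = (if P' then 1 else 0) - (if Q' then 1 else 0)"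
  by simp

lemma delta0_pt: "delta0 Q0' Q1' s' t' Z' (e,\<gamma>) (a,p) =
  (if a \<in> Q1' \<and> s' a = e \<and> p = (fst \<gamma>, snd \<gamma> @ [a]) \<and> p \<in> basis_paths Q0' Q1' s' t' Z' then 1 else 0)
- (if a \<in> Q1' \<and> t' a = e \<and> p = (s' a, a # snd \<gamma>) \<and> p \<in> basis_paths Q0' Q1' s' t' Z' then 1 else 0)"
  by (simp add: delta0_def)

lemma dA_triv: assumes v: "v \<in> Q0" shows "delta0 Q0 Q1 s t Z (v,(v,[])) = chi v"
proof
  fix y :: "'e \<times> ('v \<times> 'e list)"
  obtain a w l where y: "y = (a,(w,l))" by (cases y) auto
  have "delta0 Q0 Q1 s t Z (v,(v,[])) (a,(w,l)) = (if a \<in> Q1 \<and> l = [a] \<and> w = s a \<and> s a = v then 1 else 0)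
     - (if a \<in> Q1 \<and> l = [a] \<and> w = s a \<and> t a = v then 1 else 0)"
    unfolding delta0_pt
    by (rule ite_diff_cong) (use BA_cons[of "[a]" v] BA_cons[of "[a]" "s a"] bp_single[of a] in auto)
  also have "\<dots> = chi v (a,(w,l))" by (simp add: chi_def)
  finally show "delta0 Q0 Q1 s t Z (v,(v,[])) y = chi v y" using y by simp
qed

lemma dA_cyc: assumes b: "bp l" and cyc: "t (last l) = s (hd l)"
  shows "delta0 Q0 Q1 s t Z (s (hd l),(s (hd l),l)) = rho l"
proof
  fix y :: "'e \<times> ('v \<times> 'e list)"
  have ln: "l \<noteq> []" using b bp_ne by auto
  obtain a w l' where y: "y = (a,(w,l'))" by (cases y) auto
  have "delta0 Q0 Q1 s t Z (s (hd l),(s (hd l),l)) (a,(w,l')) =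
     (if l' = l @ [a] \<and> w = s (hd l) \<and> bp (l @ [a]) then 1 else 0)
   - (if l' = a # l \<and> w = s a \<and> bp (a # l) then 1 else 0)"
    unfolding delta0_pt
    by (rule ite_diff_cong) (use BA_cons[of "l @ [a]" "s (hd l)"] BA_cons[of "a # l" "s a"]
        bp_snoc[of l a] bp_cons[of a l] ln cyc in auto)
  also have "\<dots> = rho l (a,(w,l'))" by (simp add: rho_def)
  finally show "delta0 Q0 Q1 s t Z (s (hd l),(s (hd l),l)) y = rho l y" using y by simp
qed

lemma dB_triv: assumes v: "v \<in> g ` Q0" shows "delta0 (g ` Q0) Q1 (g \<circ> s) (g \<circ> t) ZB (v,(v,[])) = chiB v"
proof
  fix y :: "'e \<times> ('v \<times> 'e list)"
  obtain a w l where y: "y = (a,(w,l))" by (cases y) auto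
  have "delta0 (g ` Q0) Q1 (g \<circ> s) (g \<circ> t) ZB (v,(v,[])) (a,(w,l)) =
       (if a \<in> Q1 \<and> l = [a] \<and> w = g (s a) \<and> g (s a) = v then 1 else 0)
     - (if a \<in> Q1 \<and> l = [a] \<and> w = g (s a) \<and> g (t a) = v then 1 else 0)"
    unfolding delta0_pt
    by (rule ite_diff_cong) (use BB_cons[of "[a]" v] BB_cons[of "[a]" "g (s a)"] bp_single[of a] in auto)
  also have "\<dots> = chiB v (a,(w,l))" by (simp add: chiB_def)
  finally show "delta0 (g ` Q0) Q1 (g \<circ> s) (g \<circ> t) ZB (v,(v,[])) y = chiB v y" using y by simp
qed

lemma Fm_rho: assumes ln: "l \<noteq> []" shows "Fm (rho l) (a,(w,l')) =
   (if l' = l @ [a] \<and> w = g (s (hd l)) \<and> bp (l @ [a]) then 1 else 0)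
 - (if l' = a # l \<and> w = g (s a) \<and> bp (a # l) then 1 else 0)"
proof (cases "l' \<noteq> [] \<and> w = g (s (hd l'))")
  case True
  then have "Fm (rho l) (a,(w,l')) = rho l (a,(s (hd l'), l'))" by (simp add: Fm_def DD_def hh_def)
  also have "\<dots> = (if l' = l @ [a] \<and> s (hd l') = s (hd l) \<and> bp (l @ [a]) then 1 else 0)
       - (if l' = a # l \<and> s (hd l') = s a \<and> bp (a # l) then 1 else 0)" by (simp add: rho_def)
  also have "\<dots> = (if l' = l @ [a] \<and> w = g (s (hd l)) \<and> bp (l @ [a]) then 1 else 0)
     - (if l' = a # l \<and> w = g (s a) \<and> bp (a # l) then 1 else 0)"
    by (rule ite_diff_cong) (use True ln in auto)
  finally show ?thesis .
next
  case False
  then have f0: "Fm (rho l) (a,(w,l')) = 0" using False by (auto simp add: Fm_def DD_def)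
  have n1: "\<not>(l' = l @ [a] \<and> w = g (s (hd l)) \<and> bp (l @ [a]))" using False ln by auto
  have n2: "\<not>(l' = a # l \<and> w = g (s a) \<and> bp (a # l))" using False by auto
  show ?thesis by (simp only: if_not_P[OF n1] if_not_P[OF n2] diff_zero f0)
qed

lemma dB_cyc: assumes b: "bp l" and cyc: "g (t (last l)) = g (s (hd l))"
  shows "delta0 (g ` Q0) Q1 (g \<circ> s) (g \<circ> t) ZB (g (s (hd l)),(g (s (hd l)),l)) = Fm (rho l)"
proof
  fix y :: "'e \<times> ('v \<times> 'e list)"
  have ln: "l \<noteq> []" using b bp_ne by auto
  obtain a w l' where y: "y = (a,(w,l'))" by (cases y) auto
  have "delta0 (g ` Q0) Q1 (g \<circ> s) (g \<circ> t) ZB (g (s (hd l)),(g (s (hd l)),l)) (a,(w,l')) =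
     (if l' = l @ [a] \<and> w = g (s (hd l)) \<and> bp (l @ [a]) then 1 else 0)
   - (if l' = a # l \<and> w = g (s a) \<and> bp (a # l) then 1 else 0)"
    unfolding delta0_pt
    by (rule ite_diff_cong) (use BB_cons[of "l @ [a]" "g (s (hd l))"] BB_cons[of "a # l" "g (s a)"]
        bp_snoc[of l a] bp_cons[of a l] ln cyc in auto)
  also have "\<dots> = Fm (rho l) (a,(w,l'))" by (rule Fm_rho[OF ln, symmetric])
  finally show "delta0 (g ` Q0) Q1 (g \<circ> s) (g \<circ> t) ZB (g (s (hd l)),(g (s (hd l)),l)) y = Fm (rho l) y"
    using y by simp
qed

lemma chiB_Fm: "v \<noteq> v1 \<Longrightarrow> v \<noteq> vn \<Longrightarrow> chiB v = Fm (chi v)"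
proof
  fix y :: "'e \<times> ('v \<times> 'e list)"
  assume v: "v \<noteq> v1" "v \<noteq> vn"
  obtain a w l where y: "y = (a,(w,l))" by (cases y) auto
  have "g x = v \<longleftrightarrow> x = v" for x using v by (auto simp: glue_def)
  then show "chiB v y = Fm (chi v) y"
    unfolding y chiB_def Fm_def DD_def hh_def chi_def by auto
qed

lemma chiB_Fm1: "chiB v1 = Fm (chi v1 + chi vn)"
proof
  fix y :: "'e \<times> ('v \<times> 'e list)"
  obtain a w l where y: "y = (a,(w,l))" by (cases y) auto
  have "g x = v1 \<longleftrightarrow> x = v1 \<or> x = vn" for x using neq by (auto simp: glue_def)
  then show "chiB v1 y = Fm (chi v1 + chi vn) y"
    unfolding y chiB_def Fm_def DD_def hh_def chi_def using neq by auto
qed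

end

context GS begin

lemma tgt_cons: "l \<noteq> [] \<Longrightarrow> qpath_tgt t' (v,l) = t' (last l)" by (simp add: qpath_tgt_def)
lemma tgt_nil: "qpath_tgt t' (v,[]) = v" by (simp add: qpath_tgt_def)

definition CA where "CA = {l. bp l \<and> t (last l) = s (hd l)}"
definition CB where "CB = {l. bp l \<and> g (t (last l)) = g (s (hd l))}"
definition NEW where "NEW = {l. bp l \<and> t (last l) \<noteq> s (hd l) \<and> g (t (last l)) = g (s (hd l))}"

lemma CB_split: "CB = CA \<union> NEW" unfolding CA_def CB_def NEW_def by auto

lemma bp_finite: "finite {l. bp l}"
proof -
  obtain N where N: "\<forall>p. is_qpath Q0 Q1 s t p \<and> length (snd p) \<ge> N \<longrightarrow> (\<exists>r\<in>Z. subpath r p)"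
    using mp unfolding monomial_presentation_def by blast
  have "{l. bp l} \<subseteq> {xs. set xs \<subseteq> Q1 \<and> length xs \<le> N}"
  proof
    fix l assume "l \<in> {l. bp l}"
    then have b: "bp l" by simp
    then have "(s (hd l), l) \<in> BA" unfolding bp_def by simp
    then have "is_qpath Q0 Q1 s t (s (hd l), l)" "\<forall>r\<in>Z. \<not> subpath r (s (hd l), l)"
      unfolding basis_paths_def by auto
    then have "length l < N" using N by (metis linorder_not_le snd_conv)
    then show "l \<in> {xs. set xs \<subseteq> Q1 \<and> length xs \<le> N}" using bp_Q1[OF b] by simp
  qed
  moreover have "finite {xs. set xs \<subseteq> Q1 \<and> length xs \<le> N}"
    by (rule finite_lists_length_le) (rule quiv(2))
  ultimately show ?thesis by (rule finite_subset)
qed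

lemma par0A: "par0 Q0 Q1 s t Z = (\<lambda>v. (v,(v,[]))) ` Q0 \<union> (\<lambda>l. (s (hd l),(s (hd l),l))) ` CA"
proof (rule set_eqI)
  fix x :: "'v \<times> ('v \<times> 'e list)"
  obtain e w l where x: "x = (e,(w,l))" by (cases x) auto
  show "x \<in> par0 Q0 Q1 s t Z \<longleftrightarrow> x \<in> (\<lambda>v. (v,(v,[]))) ` Q0 \<union> (\<lambda>l. (s (hd l),(s (hd l),l))) ` CA"
  proof (cases "l = []")
    case True then show ?thesis using x bp_ne by (auto simp: par0_def BA_nil tgt_nil CA_def)
  next
    case False then show ?thesis using x bp_Q0 by (auto simp: par0_def BA_cons tgt_cons CA_def)
  qed
qed

lemma par0B: "par0 (g ` Q0) Q1 (g \<circ> s) (g \<circ> t) ZB =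
   (\<lambda>v. (v,(v,[]))) ` (g ` Q0) \<union> (\<lambda>l. (g (s (hd l)),(g (s (hd l)),l))) ` CB"
proof (rule set_eqI)
  fix x :: "'v \<times> ('v \<times> 'e list)"
  obtain e w l where x: "x = (e,(w,l))" by (cases x) auto
  show "x \<in> par0 (g ` Q0) Q1 (g \<circ> s) (g \<circ> t) ZB \<longleftrightarrow>
     x \<in> (\<lambda>v. (v,(v,[]))) ` (g ` Q0) \<union> (\<lambda>l. (g (s (hd l)),(g (s (hd l)),l))) ` CB"
  proof (cases "l = []")
    case True then show ?thesis using x bp_ne by (auto simp: par0_def BB_nil tgt_nil CB_def)
  next
    case False
    have L: "x \<in> par0 (g ` Q0) Q1 (g \<circ> s) (g \<circ> t) ZB \<longleftrightarrow>
        e \<in> g ` Q0 \<and> bp l \<and> w = g (s (hd l)) \<and> e = w \<and> g (t (last l)) = e"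
      using False by (auto simp: par0_def BB_cons tgt_cons x)
    have R: "x \<in> (\<lambda>v. (v,(v,[]))) ` (g ` Q0) \<union> (\<lambda>l. (g (s (hd l)),(g (s (hd l)),l))) ` CB \<longleftrightarrow>
        bp l \<and> e = g (s (hd l)) \<and> w = g (s (hd l)) \<and> g (t (last l)) = g (s (hd l))"
      using False by (auto simp: x CB_def)
    have "bp l \<Longrightarrow> g (s (hd l)) \<in> g ` Q0" using bp_Q0 by blast
    then show ?thesis unfolding L R by auto
  qed
qed

lemma imgA: "(\<lambda>x. delta0 Q0 Q1 s t Z x :: _ \<Rightarrow> 'k::ring_1) ` par0 Q0 Q1 s t Z = chi ` Q0 \<union> rho ` CA"
proof -
  have "(\<lambda>v. delta0 Q0 Q1 s t Z (v,(v,[])) :: _ \<Rightarrow> 'k) ` Q0 = chi ` Q0"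
    by (rule image_cong[OF refl]) (simp add: dA_triv)
  moreover have "(\<lambda>l. delta0 Q0 Q1 s t Z (s (hd l),(s (hd l),l)) :: _ \<Rightarrow> 'k) ` CA = rho ` CA"
    by (rule image_cong[OF refl]) (simp add: dA_cyc CA_def)
  ultimately show ?thesis unfolding par0A image_Un image_image by simp
qed

lemma imgB: "(\<lambda>x. delta0 (g ` Q0) Q1 (g \<circ> s) (g \<circ> t) ZB x :: _ \<Rightarrow> 'k::ring_1) ` par0 (g ` Q0) Q1 (g \<circ> s) (g \<circ> t) ZB
   = chiB ` (g ` Q0) \<union> ((\<lambda>l. Fm (rho l)) ` CA \<union> (\<lambda>l. Fm (rho l)) ` NEW)"
proof -
  have "(\<lambda>v. delta0 (g ` Q0) Q1 (g \<circ> s) (g \<circ> t) ZB (v,(v,[])) :: _ \<Rightarrow> 'k) ` (g ` Q0) = chiB ` (g ` Q0)"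
    by (rule image_cong[OF refl]) (simp add: dB_triv)
  moreover have "(\<lambda>l. delta0 (g ` Q0) Q1 (g \<circ> s) (g \<circ> t) ZB (g (s (hd l)),(g (s (hd l)),l)) :: _ \<Rightarrow> 'k) ` CB
     = (\<lambda>l. Fm (rho l)) ` CB"
    by (rule image_cong[OF refl]) (simp add: dB_cyc CB_def)
  ultimately show ?thesis unfolding par0B image_Un image_image CB_split by simp
qed

definition L1 :: "('e \<times> ('v \<times> 'e list)) set" where
  "L1 = {y. case y of (a,(w,l)) \<Rightarrow> length l = 1}"

lemma chi_supp: "chi v y \<noteq> 0 \<Longrightarrow> y \<in> L1 \<and> (\<exists>a l. y = (a,(s (hd l), l)) \<and> l \<noteq> [])"
  by (cases y) (auto simp: chi_def L1_def split: if_splits)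

lemma chiB_supp: "chiB v y \<noteq> 0 \<Longrightarrow> y \<in> L1"
  by (cases y) (auto simp: chiB_def L1_def split: if_splits)

lemma rho_supp: "l \<noteq> [] \<Longrightarrow> rho l y \<noteq> 0 \<Longrightarrow> y \<notin> L1 \<and> (\<exists>a l'. y = (a,(s (hd l'), l')) \<and> l' \<noteq> [])"
  by (cases y) (auto simp: rho_def L1_def split: if_splits)

lemma Fm_rho_supp: "l \<noteq> [] \<Longrightarrow> Fm (rho l) y \<noteq> 0 \<Longrightarrow> y \<notin> L1"
  by (cases y) (auto simp: Fm_rho L1_def split: if_splits)

lemma Fm_eq: "Fm = (\<lambda>f y. if DD y then f (hh y) else 0)"
  by (rule ext) (simp add: Fm_def)

lemma canon_in: "l' \<noteq> [] \<Longrightarrow> (a,(s (hd l'), l')) \<in> hh ` Collect DD"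
  by (rule image_eqI[of _ _ "(a,(g (s (hd l')), l'))"]) (auto simp: hh_def DD_def)

definition POLD :: "('e \<times> ('v \<times> 'e list)) set" where
  "POLD = {y. case y of (a,(w,l')) \<Rightarrow> l' \<noteq> [] \<and> ((last l' = a \<and> s (hd l') = s a) \<or> (hd l' = a \<and> t a = t (last l')))}"

lemma Fm_rho_nz_cases: "l \<noteq> [] \<Longrightarrow> Fm (rho l) (a,(w,l')) \<noteq> 0 \<Longrightarrow>
   (l' = l @ [a] \<and> bp (l @ [a])) \<or> (l' = a # l \<and> bp (a # l))"
  by (auto simp: Fm_rho split: if_splits)

lemma old_supp: assumes l: "l \<in> CA" and nz: "Fm (rho l) y \<noteq> 0" shows "y \<in> POLD"
proof -
  obtain a w l' where y: "y = (a,(w,l'))" by (cases y) auto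
  have b: "bp l" "t (last l) = s (hd l)" using l by (auto simp: CA_def)
  have ln: "l \<noteq> []" using b bp_ne by auto
  from Fm_rho_nz_cases[OF ln nz[unfolded y]]
  show ?thesis
  proof
    assume c: "l' = l @ [a] \<and> bp (l @ [a])"
    then have "s a = t (last l)" using bp_snoc ln by blast
    then show ?thesis using c b ln y by (auto simp: POLD_def)
  next
    assume c: "l' = a # l \<and> bp (a # l)"
    then have "t a = s (hd l)" using bp_cons ln by blast
    then show ?thesis using c b ln y by (auto simp: POLD_def)
  qed
qed

lemma new_hd: "l \<in> NEW \<Longrightarrow> bp (l @ [a]) \<Longrightarrow> hd l \<noteq> a"
  using bp_snoc[of l a] bp_ne unfolding NEW_def by force

lemma new_last: "l \<in> NEW \<Longrightarrow> bp (a # l) \<Longrightarrow> last l \<noteq> a"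
  using bp_cons[of a l] bp_ne unfolding NEW_def by force

lemma new_supp: assumes l: "l \<in> NEW" and y: "y \<in> POLD" shows "Fm (rho l) y = 0"
proof (rule ccontr)
  assume nz: "Fm (rho l) y \<noteq> 0"
  obtain a w l' where yy: "y = (a,(w,l'))" by (cases y) auto
  have b: "bp l" "t (last l) \<noteq> s (hd l)" using l by (auto simp: NEW_def)
  have ln: "l \<noteq> []" using b bp_ne by auto
  have P: "(last l' = a \<and> s (hd l') = s a) \<or> (hd l' = a \<and> t a = t (last l'))"
    using y yy by (auto simp: POLD_def)
  from Fm_rho_nz_cases[OF ln nz[unfolded yy]]
  show False
  proof
    assume c: "l' = l @ [a] \<and> bp (l @ [a])"
    then have "s a = t (last l)" using bp_snoc ln by blast
    moreover have "hd l \<noteq> a" using new_hd[OF l] c by blast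
    ultimately show False using P c b ln by auto
  next
    assume c: "l' = a # l \<and> bp (a # l)"
    then have "t a = s (hd l)" using bp_cons ln by blast
    moreover have "last l \<noteq> a" using new_last[OF l] c by blast
    ultimately show False using P c b ln by auto
  qed
qed

lemma new_disj: assumes l: "l \<in> NEW" and m: "m \<in> NEW" and lm: "l \<noteq> m"
  shows "(Fm (rho l) y :: 'k::ring_1) = 0 \<or> (Fm (rho m) y :: 'k) = 0"
proof (rule ccontr)
  assume "\<not> ?thesis"
  then have nl: "(Fm (rho l) y :: 'k) \<noteq> 0" and nm: "(Fm (rho m) y :: 'k) \<noteq> 0" by auto
  obtain a w l' where yy: "y = (a,(w,l'))" by (cases y) auto
  have ln: "l \<noteq> []" and mn: "m \<noteq> []" using l m bp_ne by (auto simp: NEW_def)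
  note cl = Fm_rho_nz_cases[OF ln nl[unfolded yy]]
  note cm = Fm_rho_nz_cases[OF mn nm[unfolded yy]]
  have hl: "bp (l @ [a]) \<Longrightarrow> hd l \<noteq> a" using new_hd[OF l] by blast
  have hm: "bp (m @ [a]) \<Longrightarrow> hd m \<noteq> a" using new_hd[OF m] by blast
  from cl show False
  proof
    assume c1: "l' = l @ [a] \<and> bp (l @ [a])"
    from cm show False
    proof
      assume "l' = m @ [a] \<and> bp (m @ [a])" then show False using c1 lm by auto
    next
      assume "l' = a # m \<and> bp (a # m)" then have "hd (l @ [a]) = a" using c1 by simp
      then show False using hl c1 ln by (simp add: hd_append)
    qed
  next
    assume c2: "l' = a # l \<and> bp (a # l)"
    from cm show False
    proof
      assume c3: "l' = m @ [a] \<and> bp (m @ [a])" then have "hd (m @ [a]) = a" using c2 by (metis list.sel(1))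
      then show False using hm c3 mn by (simp add: hd_append)
    next
      assume "l' = a # m \<and> bp (a # m)" then show False using c2 lm by auto
    qed
  qed
qed

lemma ite_diff_zero: "((if P then (1::'a::ring_1) else 0) - (if Q then 1 else 0) = 0) \<longleftrightarrow> (P \<longleftrightarrow> Q)"
  by auto

lemma Fm_zero_iff: assumes ln: "l \<noteq> []"
  shows "((Fm (rho l) :: _ \<Rightarrow> 'a::ring_1) = 0) \<longleftrightarrow>
     (\<forall>a w l'. (l' = l @ [a] \<and> w = g (s (hd l)) \<and> bp (l @ [a])) \<longleftrightarrow> (l' = a # l \<and> w = g (s a) \<and> bp (a # l)))"
proof -
  have "((Fm (rho l) :: _ \<Rightarrow> 'a) = 0) \<longleftrightarrow> (\<forall>a w l'. (Fm (rho l) (a,(w,l')) :: 'a) = 0)"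
    by (auto simp: fun_eq_iff)
  also have "\<dots> \<longleftrightarrow> (\<forall>a w l'. (l' = l @ [a] \<and> w = g (s (hd l)) \<and> bp (l @ [a])) \<longleftrightarrow> (l' = a # l \<and> w = g (s a) \<and> bp (a # l)))"
    unfolding Fm_rho[OF ln] ite_diff_zero ..
  finally show ?thesis .
qed

lemma Fm_rho_nz: "l \<noteq> [] \<Longrightarrow> ((Fm (rho l) :: _ \<Rightarrow> 'k::ring_1) \<noteq> 0) \<longleftrightarrow> ((Fm (rho l) :: _ \<Rightarrow> int) \<noteq> 0)"
  using Fm_zero_iff[where 'a='k] Fm_zero_iff[where 'a=int] by simp

end

lemma conn_sym: "(x,y) \<in> conn_rel Q1 s t \<Longrightarrow> (y,x) \<in> conn_rel Q1 s t"
proof -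
  assume xy: "(x,y) \<in> conn_rel Q1 s t"
  have "sym ({(s a, t a) | a. a \<in> Q1} \<union> {(t a, s a) | a. a \<in> Q1})"
    by (auto simp: sym_def)
  then have "sym (conn_rel Q1 s t)" unfolding conn_rel_def by (rule sym_rtrancl)
  then show ?thesis using xy by (auto dest: symD)
qed

lemma conn_trans: "(x,y) \<in> conn_rel Q1 s t \<Longrightarrow> (y,z) \<in> conn_rel Q1 s t \<Longrightarrow> (x,z) \<in> conn_rel Q1 s t"
  unfolding conn_rel_def by (rule rtrancl_trans)

lemma conn_refl: "(x,x) \<in> conn_rel Q1 s t"
  unfolding conn_rel_def by simp

lemma conn_edge: "a \<in> Q1 \<Longrightarrow> (s a, t a) \<in> conn_rel Q1 s t"
  unfolding conn_rel_def by (rule r_into_rtrancl) blast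

lemma conn_const: assumes c: "\<forall>a\<in>Q1. c (s a) = c (t a)" and xy: "(x,y) \<in> conn_rel Q1 s t"
  shows "c x = c y"
  using xy unfolding conn_rel_def
proof (induction rule: rtrancl_induct)
  case base then show ?case by simp
next
  case (step y z) then show ?case using c by auto
qed

lemma conn_map: assumes E: "\<forall>a\<in>Q1. (f (s a), f (t a)) \<in> conn_rel Q1' s' t'"
  and xy: "(x,y) \<in> conn_rel Q1 s t"
  shows "(f x, f y) \<in> conn_rel Q1' s' t'"
  using xy unfolding conn_rel_def[of Q1 s t]
proof (induction rule: rtrancl_induct)
  case base then show ?case by (rule conn_refl)
next
  case (step y z)
  from step.hyps(2) obtain a where a: "a \<in> Q1" "(y,z) = (s a, t a) \<or> (y,z) = (t a, s a)" by blast
  have e: "(f (s a), f (t a)) \<in> conn_rel Q1' s' t'" using a(1) E by blast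
  have "(f y, f z) \<in> conn_rel Q1' s' t'"
  proof (cases "(y,z) = (s a, t a)")
    case True then show ?thesis using e by simp
  next
    case False then have "(y,z) = (t a, s a)" using a(2) by blast
    then show ?thesis using conn_sym[OF e] by simp
  qed
  from step.IH this show ?case by (rule conn_trans)
qed

lemma card_eq_kernel:
  assumes "\<And>x y. x \<in> A \<Longrightarrow> y \<in> A \<Longrightarrow> f x = f y \<longleftrightarrow> h x = h y"
  shows "card (f ` A) = card (h ` A)"
proof -
  let ?P = "(\<lambda>x. (f x, h x)) ` A"
  have "inj_on fst ?P" using assms by (auto simp: inj_on_def)
  moreover have "inj_on snd ?P" using assms by (auto simp: inj_on_def)
  moreover have "fst ` ?P = f ` A" "snd ` ?P = h ` A" by (auto simp: image_image)
  ultimately show ?thesis by (metis card_image)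
qed

lemma quotient_image: "A // r = (\<lambda>x. r `` {x}) ` A"
  unfolding quotient_def by auto

context GS begin

abbreviation "R \<equiv> conn_rel Q1 s t"
abbreviation "RB \<equiv> conn_rel Q1 (g \<circ> s) (g \<circ> t)"

lemma R_sym: "(x,y) \<in> R \<Longrightarrow> (y,x) \<in> R" by (rule conn_sym)
lemma R_trans: "(x,y) \<in> R \<Longrightarrow> (y,z) \<in> R \<Longrightarrow> (x,z) \<in> R" by (rule conn_trans)
lemma R_refl: "(x,x) \<in> R" by (rule conn_refl)
lemma R_edge: "a \<in> Q1 \<Longrightarrow> (s a, t a) \<in> R" by (rule conn_edge)
lemma RB_sym: "(x,y) \<in> RB \<Longrightarrow> (y,x) \<in> RB" by (rule conn_sym)
lemma RB_trans: "(x,y) \<in> RB \<Longrightarrow> (y,z) \<in> RB \<Longrightarrow> (x,z) \<in> RB" by (rule conn_trans)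
lemma RB_refl: "(x,x) \<in> RB" by (rule conn_refl)
lemma RB_edge: "a \<in> Q1 \<Longrightarrow> (g (s a), g (t a)) \<in> RB" using conn_edge[of a Q1 "g \<circ> s" "g \<circ> t"] by simp

lemma path_conn: "set l \<subseteq> Q1 \<Longrightarrow> (\<forall>i. Suc i < length l \<longrightarrow> t (l!i) = s (l!Suc i)) \<Longrightarrow> l \<noteq> [] \<Longrightarrow>
   (s (hd l), t (last l)) \<in> R"
proof (induction l)
  case Nil then show ?case by simp
next
  case (Cons a m)
  show ?case
  proof (cases "m = []")
    case True then show ?thesis using Cons.prems R_edge by auto
  next
    case False
    have c: "\<forall>i. Suc i < length m \<longrightarrow> t (m!i) = s (m!Suc i)"
    proof (intro allI impI)
      fix i assume "Suc i < length m"
      then show "t (m!i) = s (m!Suc i)" using Cons.prems(2) spec[OF Cons.prems(2), of "Suc i"] by simp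
    qed
    have IH: "(s (hd m), t (last m)) \<in> R" using Cons.IH Cons.prems(1) c False by simp
    have "t a = s (hd m)" using Cons.prems(2) spec[OF Cons.prems(2), of 0] False by (simp add: hd_conv_nth)
    moreover have "(s a, t a) \<in> R" using Cons.prems(1) R_edge by simp
    ultimately show ?thesis using IH False R_trans by fastforce
  qed
qed

lemma bp_conn: "bp l \<Longrightarrow> (s (hd l), t (last l)) \<in> R"
  using path_conn unfolding bp_unfold by blast

definition M where "M = {z. (z,v1) \<in> R \<or> (z,vn) \<in> R}"

lemma M_closed: "z \<in> M \<Longrightarrow> (z,z') \<in> R \<Longrightarrow> z' \<in> M"
  unfolding M_def using R_sym R_trans by blast

lemma RB_char: "(g x, g y) \<in> RB \<longleftrightarrow> (x,y) \<in> R \<or> (x \<in> M \<and> y \<in> M)"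
proof
  have mp1: "\<forall>u. (g x, u) \<in> RB \<longrightarrow> (\<forall>y. g y = u \<longrightarrow> (x,y) \<in> R \<or> (x \<in> M \<and> y \<in> M))"
  proof (rule allI, rule impI)
    fix u assume "(g x, u) \<in> RB"
    then show "\<forall>y. g y = u \<longrightarrow> (x,y) \<in> R \<or> (x \<in> M \<and> y \<in> M)"
      unfolding conn_rel_def[of Q1 "g \<circ> s"]
    proof (induction rule: rtrancl_induct)
      case base
      show ?case
      proof (intro allI impI)
        fix y assume "g y = g x"
        then have "y = x \<or> (x \<in> {v1,vn} \<and> y \<in> {v1,vn})" using g_eq by blast
        then show "(x,y) \<in> R \<or> (x \<in> M \<and> y \<in> M)" using R_refl unfolding M_def by auto
      qed
    next
      case (step u w)
      then obtain a where a: "a \<in> Q1" "(u,w) = (g (s a), g (t a)) \<or> (u,w) = (g (t a), g (s a))" by auto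
      show ?case
      proof (intro allI impI)
        fix y assume gy: "g y = w"
        obtain p q where pq: "u = g p" "w = g q" "(p,q) \<in> R"
          using a R_edge[of a] R_sym by (metis prod.inject)
        have IH: "(x,p) \<in> R \<or> (x \<in> M \<and> p \<in> M)" using step.IH pq by blast
        then have xq: "(x,q) \<in> R \<or> (x \<in> M \<and> q \<in> M)" using pq(3) R_trans M_closed by blast
        have "y = q \<or> (y \<in> {v1,vn} \<and> q \<in> {v1,vn})" using gy pq(2) g_eq by blast
        moreover have "v1 \<in> M" "vn \<in> M" unfolding M_def using R_refl by auto
        moreover have "(x,q) \<in> R \<Longrightarrow> q \<in> M \<Longrightarrow> x \<in> M" using R_trans unfolding M_def by blast
        ultimately show "(x,y) \<in> R \<or> (x \<in> M \<and> y \<in> M)" using xq by auto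
      qed
    qed
  qed
  then show "(g x, g y) \<in> RB \<Longrightarrow> (x,y) \<in> R \<or> (x \<in> M \<and> y \<in> M)" by blast
next
  have E: "\<forall>a\<in>Q1. (g (s a), g (t a)) \<in> RB" using RB_edge by blast
  note cm = conn_map[of Q1 g s t Q1 "g \<circ> s" "g \<circ> t", OF E]
  assume "(x,y) \<in> R \<or> (x \<in> M \<and> y \<in> M)"
  then show "(g x, g y) \<in> RB"
  proof
    assume "(x,y) \<in> R" then show ?thesis using cm by blast
  next
    assume xy: "x \<in> M \<and> y \<in> M"
    have gv: "g v1 = v1" "g vn = v1" using g_v by auto
    have "(g x, v1) \<in> RB" using xy cm[of x v1] cm[of x vn] gv unfolding M_def by auto
    moreover have "(g y, v1) \<in> RB" using xy cm[of y v1] cm[of y vn] gv unfolding M_def by auto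
    ultimately show ?thesis using RB_sym RB_trans by blast
  qed
qed

lemma Rclass_eq: "R `` {x} = R `` {y} \<longleftrightarrow> (x,y) \<in> R"
  using R_sym R_trans R_refl by blast

lemma RBclass_eq: "RB `` {x} = RB `` {y} \<longleftrightarrow> (x,y) \<in> RB"
  using RB_sym RB_trans RB_refl by blast

lemma ncomp_conn: "(v1,vn) \<in> R \<Longrightarrow> ncomp (g ` Q0) Q1 (g \<circ> s) (g \<circ> t) = ncomp Q0 Q1 s t"
proof -
  assume c: "(v1,vn) \<in> R"
  have "ncomp (g ` Q0) Q1 (g \<circ> s) (g \<circ> t) = card ((\<lambda>x. RB `` {g x}) ` Q0)"
    unfolding ncomp_def quotient_image image_image ..
  also have "\<dots> = card ((\<lambda>x. R `` {x}) ` Q0)"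
  proof (rule card_eq_kernel)
    fix x y
    have "x \<in> M \<Longrightarrow> (x,v1) \<in> R" using c R_sym R_trans unfolding M_def by blast
    then have "(x \<in> M \<and> y \<in> M) \<Longrightarrow> (x,y) \<in> R"
      using c R_sym R_trans unfolding M_def by blast
    then show "RB `` {g x} = RB `` {g y} \<longleftrightarrow> R `` {x} = R `` {y}"
      unfolding RBclass_eq Rclass_eq RB_char by blast
  qed
  also have "\<dots> = ncomp Q0 Q1 s t" unfolding ncomp_def quotient_image ..
  finally show ?thesis .
qed

lemma ncomp_nconn: "(v1,vn) \<notin> R \<Longrightarrow> ncomp Q0 Q1 s t = ncomp (g ` Q0) Q1 (g \<circ> s) (g \<circ> t) + 1"
proof -
  assume nc: "(v1,vn) \<notin> R"
  let ?A' = "Q0 - {x. (x,vn) \<in> R}"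
  let ?fA = "\<lambda>x. R `` {x}" and ?fB = "\<lambda>x. RB `` {g x}"
  have fin: "finite ?A'" using quiv(1) by simp
  have v1A: "v1 \<in> ?A'" using v1Q nc by simp
  have "?fA ` Q0 = insert (?fA vn) (?fA ` ?A')" using vnQ Rclass_eq by auto
  moreover have "?fA vn \<notin> ?fA ` ?A'" using Rclass_eq R_sym by auto
  ultimately have cA: "card (?fA ` Q0) = card (?fA ` ?A') + 1" using fin by simp
  have "?fB ` Q0 = ?fB ` ?A'"
  proof
    show "?fB ` Q0 \<subseteq> ?fB ` ?A'"
    proof
      fix X assume "X \<in> ?fB ` Q0"
      then obtain x where x: "x \<in> Q0" "X = ?fB x" by blast
      show "X \<in> ?fB ` ?A'"
      proof (cases "(x,vn) \<in> R")
        case True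
        then have "x \<in> M" "v1 \<in> M" unfolding M_def using R_refl by auto
        then have "(g x, g v1) \<in> RB" using RB_char by blast
        then have "X = ?fB v1" using x RBclass_eq by simp
        then show ?thesis using v1A by blast
      next
        case False then show ?thesis using x by blast
      qed
    qed
  qed auto
  then have "card (?fB ` Q0) = card (?fB ` ?A')" by simp
  also have "\<dots> = card (?fA ` ?A')"
  proof (rule card_eq_kernel)
    fix x y assume x: "x \<in> ?A'" and y: "y \<in> ?A'"
    have "x \<in> M \<Longrightarrow> (x,v1) \<in> R" "y \<in> M \<Longrightarrow> (y,v1) \<in> R" using x y unfolding M_def by auto
    then have "(x \<in> M \<and> y \<in> M) \<Longrightarrow> (x,y) \<in> R" using R_sym R_trans by blast
    then show "?fB x = ?fB y \<longleftrightarrow> ?fA x = ?fA y"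
      unfolding RBclass_eq Rclass_eq RB_char by blast
  qed
  finally have "card (?fB ` Q0) = card (?fA ` ?A')" .
  moreover have "ncomp (g ` Q0) Q1 (g \<circ> s) (g \<circ> t) = card (?fB ` Q0)"
    unfolding ncomp_def quotient_image image_image ..
  moreover have "ncomp Q0 Q1 s t = card (?fA ` Q0)" unfolding ncomp_def quotient_image ..
  ultimately show ?thesis using cA by simp
qed

end

context GS begin

definition chi' :: "'v \<Rightarrow> 'e \<times> ('v \<times> 'e list) \<Rightarrow> 'k::ring_1" where
  "chi' v = (if v = v1 then chi v1 + chi vn else chi v)"

lemma chi_at: "a \<in> Q1 \<Longrightarrow> chi v (a,(s a,[a])) = (if s a = v then 1 else 0) - (if t a = v then 1 else 0)"
  by (simp add: chi_def)

lemma span_chi: "fs.span (chi ` Q0 :: (_ \<Rightarrow> 'k::field) set) = fs.span (insert (chi v1) (chi' ` (Q0 - {vn})))"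
  unfolding fs.span_eq
proof
  show "chi ` Q0 \<subseteq> fs.span (insert (chi v1) (chi' ` (Q0 - {vn})) :: (_ \<Rightarrow> 'k) set)"
  proof
    fix f :: "_ \<Rightarrow> 'k" assume "f \<in> chi ` Q0"
    then obtain v where v: "v \<in> Q0" "f = chi v" by blast
    show "f \<in> fs.span (insert (chi v1) (chi' ` (Q0 - {vn})))"
    proof (cases "v = v1")
      case True then show ?thesis using v by (simp add: fs.span_base)
    next
      case False
      show ?thesis
      proof (cases "v = vn")
        case True
        have a: "chi' v1 \<in> fs.span (insert (chi v1) (chi' ` (Q0 - {vn})) :: (_ \<Rightarrow> 'k) set)"
          using v1Q neq by (intro fs.span_base) auto
        have b: "chi v1 \<in> fs.span (insert (chi v1) (chi' ` (Q0 - {vn})) :: (_ \<Rightarrow> 'k) set)"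
          by (intro fs.span_base) auto
        have "chi vn = chi' v1 - (chi v1 :: _ \<Rightarrow> 'k)" by (simp add: chi'_def)
        then show ?thesis using fs.span_diff[OF a b] v True by simp
      next
        case False2: False
        have "chi v = (chi' v :: _ \<Rightarrow> 'k)" using False by (simp add: chi'_def)
        moreover have "chi' v \<in> insert (chi v1) (chi' ` (Q0 - {vn}))" using v False2 by blast
        ultimately show ?thesis using v fs.span_base by metis
      qed
    qed
  qed
  show "insert (chi v1) (chi' ` (Q0 - {vn})) \<subseteq> fs.span (chi ` Q0 :: (_ \<Rightarrow> 'k) set)"
  proof
    fix f :: "_ \<Rightarrow> 'k" assume f: "f \<in> insert (chi v1) (chi' ` (Q0 - {vn}))"
    have c1: "chi v1 \<in> fs.span (chi ` Q0 :: (_ \<Rightarrow> 'k) set)" using v1Q by (intro fs.span_base) auto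
    have c2: "chi vn \<in> fs.span (chi ` Q0 :: (_ \<Rightarrow> 'k) set)" using vnQ by (intro fs.span_base) auto
    show "f \<in> fs.span (chi ` Q0)"
    proof (cases "f = chi v1")
      case True then show ?thesis using c1 by simp
    next
      case False
      then obtain v where v: "v \<in> Q0 - {vn}" "f = chi' v" using f by blast
      show ?thesis
      proof (cases "v = v1")
        case True then show ?thesis using v fs.span_add[OF c1 c2] by (simp add: chi'_def)
      next
        case False then show ?thesis using v by (simp add: chi'_def fs.span_base)
      qed
    qed
  qed
qed

lemma not_in_span: assumes c: "(v1,vn) \<in> R"
  shows "(chi v1 :: _ \<Rightarrow> 'k::field) \<notin> fs.span (chi' ` (Q0 - {vn}) :: (_ \<Rightarrow> 'k) set)"
proof
  define P where "P = {f :: _ \<Rightarrow> 'k. \<exists>d. d v1 = d vn \<and> (\<forall>a\<in>Q1. f (a,(s a,[a])) = d (s a) - d (t a))}"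
  have sub: "fs.subspace P"
    unfolding fs.subspace_def
  proof (intro conjI ballI allI)
    show "0 \<in> P" unfolding P_def by (rule CollectI, rule exI[of _ "\<lambda>_. 0"]) simp
  next
    fix x y assume x: "x \<in> P" and y: "y \<in> P"
    obtain d where d: "d v1 = d vn" "\<forall>a\<in>Q1. x (a,(s a,[a])) = d (s a) - d (t a)" using x P_def by blast
    obtain e where e: "e v1 = e vn" "\<forall>a\<in>Q1. y (a,(s a,[a])) = e (s a) - e (t a)" using y P_def by blast
    show "x + y \<in> P" unfolding P_def
      by (rule CollectI, rule exI[of _ "\<lambda>v. d v + e v"]) (use d e in simp)
  next
    fix c :: 'k and x assume x: "x \<in> P"
    obtain d where d: "d v1 = d vn" "\<forall>a\<in>Q1. x (a,(s a,[a])) = d (s a) - d (t a)" using x P_def by blast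
    show "fscale c x \<in> P" unfolding P_def
      by (rule CollectI, rule exI[of _ "\<lambda>v. c * d v"]) (use d in \<open>auto simp add: fscale_def right_diff_distrib\<close>)
  qed
  have gen: "chi' ` (Q0 - {vn}) \<subseteq> P"
  proof
    fix f :: "_ \<Rightarrow> 'k" assume "f \<in> chi' ` (Q0 - {vn})"
    then obtain v where v: "v \<in> Q0 - {vn}" "f = chi' v" by blast
    show "f \<in> P"
    proof (cases "v = v1")
      case True
      show ?thesis unfolding P_def
        by (rule CollectI, rule exI[of _ "\<lambda>x. if x = v1 \<or> x = vn then 1 else 0"])
           (use v True neq neq[symmetric] in \<open>simp add: chi'_def chi_at\<close>)
    next
      case False
      show ?thesis unfolding P_def
        by (rule CollectI, rule exI[of _ "\<lambda>x. if x = v then 1 else 0"])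
           (use v False in \<open>auto simp add: chi'_def chi_at\<close>)
    qed
  qed
  assume "chi v1 \<in> fs.span (chi' ` (Q0 - {vn}) :: (_ \<Rightarrow> 'k) set)"
  then have "chi v1 \<in> P" using fs.span_minimal[OF gen sub] by blast
  then obtain d where d: "d v1 = d vn" "\<forall>a\<in>Q1. (chi v1 (a,(s a,[a])) :: 'k) = d (s a) - d (t a)"
    unfolding P_def by blast
  define e where "e x = d x - (if x = v1 then 1 else 0)" for x
  have "\<forall>a\<in>Q1. e (s a) = e (t a)"
  proof
    fix a assume a: "a \<in> Q1"
    have h1: "(chi v1 (a,(s a,[a])) :: 'k) = (if s a = v1 then 1 else 0) - (if t a = v1 then 1 else 0)"
      by (rule chi_at[OF a])
    have h2: "(chi v1 (a,(s a,[a])) :: 'k) = d (s a) - d (t a)" using d(2) a by blast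
    have "(if s a = v1 then 1 else 0) - (if t a = v1 then 1 else 0) = d (s a) - d (t a)"
      using h1 h2 by simp
    then show "e (s a) = e (t a)" unfolding e_def by (simp add: algebra_simps)
  qed
  then have "e v1 = e vn" using conn_const[OF _ c] by blast
  then show False using d(1) neq by (simp add: e_def)
qed

lemma in_span: assumes nc: "(v1,vn) \<notin> R"
  shows "(chi v1 :: _ \<Rightarrow> 'k::field) \<in> fs.span (chi' ` (Q0 - {vn}) :: (_ \<Rightarrow> 'k) set)"
proof -
  define C where "C = {v \<in> Q0. (v1,v) \<in> R}"
  have finC: "finite C" using quiv(1) by (simp add: C_def)
  have v1C: "v1 \<in> C" using v1Q R_refl by (simp add: C_def)
  have vnC: "vn \<notin> C" using nc by (simp add: C_def)
  have CQ: "C \<subseteq> Q0" by (auto simp: C_def)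
  have edgeC: "s a \<in> C \<longleftrightarrow> t a \<in> C" if a: "a \<in> Q1" for a
    using quiv(3,4)[OF a] R_edge[OF a] R_sym R_trans unfolding C_def by blast
  have sum0: "(\<Sum>v\<in>C. chi v :: _ \<Rightarrow> 'k) = 0"
  proof
    fix y :: "'e \<times> ('v \<times> 'e list)"
    obtain a w l where y: "y = (a,(w,l))" by (cases y) auto
    show "(\<Sum>v\<in>C. chi v :: _ \<Rightarrow> 'k) y = 0 y"
    proof (cases "a \<in> Q1 \<and> l = [a] \<and> w = s a")
      case True
      have "(\<Sum>v\<in>C. chi v :: _ \<Rightarrow> 'k) y = (\<Sum>v\<in>C. (if s a = v then 1 else 0) - (if t a = v then 1 else 0))"
        unfolding sum_fun_apply y using True by (simp add: chi_def)
      also have "\<dots> = (if s a \<in> C then 1 else 0) - (if t a \<in> C then 1 else 0)"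
        using finC by (simp add: sum_subtractf)
      also have "\<dots> = 0" using edgeC True by simp
      finally show ?thesis by simp
    next
      case False
      have z: "\<And>v. (chi v (a,(w,l)) :: 'k) = 0" using False by (auto simp add: chi_def)
      show ?thesis unfolding sum_fun_apply y z by simp
    qed
  qed
  have "(\<Sum>v\<in>C. chi v :: _ \<Rightarrow> 'k) = chi v1 + (\<Sum>v\<in>C - {v1}. chi v)"
    using sum.remove[OF finC v1C] by simp
  then have eq: "chi v1 = - (\<Sum>v\<in>C - {v1}. chi v :: _ \<Rightarrow> 'k)" using sum0 by (simp add: eq_neg_iff_add_eq_0)
  have "(\<Sum>v\<in>C - {v1}. chi v :: _ \<Rightarrow> 'k) \<in> fs.span (chi' ` (Q0 - {vn}) :: (_ \<Rightarrow> 'k) set)"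
  proof (rule fs.span_sum)
    fix v assume v: "v \<in> C - {v1}"
    then have "chi v = (chi' v :: _ \<Rightarrow> 'k)" by (simp add: chi'_def)
    moreover have "v \<in> Q0 - {vn}" using v CQ vnC by blast
    then have "(chi' v :: _ \<Rightarrow> 'k) \<in> chi' ` (Q0 - {vn})" by blast
    ultimately show "chi v \<in> fs.span (chi' ` (Q0 - {vn}) :: (_ \<Rightarrow> 'k) set)" using fs.span_base by metis
  qed
  then show ?thesis using eq fs.span_neg by metis
qed

lemma dim_vertex: "fs.dim (chi ` Q0 :: (_ \<Rightarrow> 'k::field) set)
   = fs.dim (chi' ` (Q0 - {vn}) :: (_ \<Rightarrow> 'k) set) + (if (v1,vn) \<in> R then 1 else 0)"
proof -
  have "fs.dim (chi ` Q0 :: (_ \<Rightarrow> 'k::field) set) = fs.dim (insert (chi v1) (chi' ` (Q0 - {vn})) :: (_ \<Rightarrow> 'k) set)"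
    by (rule fs.span_eq_dim[OF span_chi])
  also have "\<dots> = (if chi v1 \<in> fs.span (chi' ` (Q0 - {vn}) :: (_ \<Rightarrow> 'k) set) then fs.dim (chi' ` (Q0 - {vn}) :: (_ \<Rightarrow> 'k) set)
     else fs.dim (chi' ` (Q0 - {vn}) :: (_ \<Rightarrow> 'k) set) + 1)"
    by (rule dim_insert_gen) (use quiv(1) in simp)
  finally show ?thesis using not_in_span in_span by auto
qed

end

context GS begin

lemma finCA: "finite CA" using bp_finite by (rule finite_subset[rotated]) (auto simp: CA_def)
lemma finNEW: "finite NEW" using bp_finite by (rule finite_subset[rotated]) (auto simp: NEW_def)

lemma dimA: "fs.dim ((\<lambda>x. delta0 Q0 Q1 s t Z x :: _ \<Rightarrow> 'k::field) ` par0 Q0 Q1 s t Z)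
   = fs.dim (chi ` Q0 :: (_ \<Rightarrow> 'k) set) + fs.dim (rho ` CA :: (_ \<Rightarrow> 'k) set)"
proof -
  have s1: "v x = 0" if hv: "v \<in> (chi ` Q0 :: (_ \<Rightarrow> 'k) set)" and hx: "x \<notin> L1" for v x
  proof -
    obtain u where "v = (chi u :: _ \<Rightarrow> 'k)" using hv by blast
    then show ?thesis using chi_supp[of u x] hx by blast
  qed
  have s2: "v x = 0" if hv: "v \<in> (rho ` CA :: (_ \<Rightarrow> 'k) set)" and hx: "x \<in> L1" for v x
  proof -
    obtain l where l: "l \<in> CA" "v = (rho l :: _ \<Rightarrow> 'k)" using hv by blast
    then have "l \<noteq> []" using bp_ne by (auto simp: CA_def)
    then show ?thesis using rho_supp[of l x] hx l by blast
  qed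
  show ?thesis unfolding imgA
    by (rule dim_union_supp[where P=L1]) (use quiv(1) finCA s1 s2 in auto)
qed

lemma dimB: "fs.dim ((\<lambda>x. delta0 (g ` Q0) Q1 (g \<circ> s) (g \<circ> t) ZB x :: _ \<Rightarrow> 'k::field) ` par0 (g ` Q0) Q1 (g \<circ> s) (g \<circ> t) ZB)
   = fs.dim (chiB ` (g ` Q0) :: (_ \<Rightarrow> 'k) set) + (fs.dim ((\<lambda>l. Fm (rho l)) ` CA :: (_ \<Rightarrow> 'k) set)
     + fs.dim ((\<lambda>l. Fm (rho l)) ` NEW :: (_ \<Rightarrow> 'k) set))"
proof -
  have s1: "v x = 0" if hv: "v \<in> (chiB ` (g ` Q0) :: (_ \<Rightarrow> 'k) set)" and hx: "x \<notin> L1" for v x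
  proof -
    obtain u where "v = (chiB u :: _ \<Rightarrow> 'k)" using hv by blast
    then show ?thesis using chiB_supp[of u x] hx by blast
  qed
  have s2: "v x = 0" if hv: "v \<in> ((\<lambda>l. Fm (rho l)) ` CA \<union> (\<lambda>l. Fm (rho l)) ` NEW :: (_ \<Rightarrow> 'k) set)" and hx: "x \<in> L1" for v x
  proof -
    obtain l where l: "l \<in> CA \<union> NEW" "v = (Fm (rho l) :: _ \<Rightarrow> 'k)" using hv by blast
    then have "l \<noteq> []" using bp_ne by (auto simp: CA_def NEW_def)
    then show ?thesis using Fm_rho_supp[of l x] hx l by blast
  qed
  have s3: "v x = 0" if hv: "v \<in> ((\<lambda>l. Fm (rho l)) ` CA :: (_ \<Rightarrow> 'k) set)" and hx: "x \<notin> POLD" for v x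
  proof -
    obtain l where l: "l \<in> CA" "v = (Fm (rho l) :: _ \<Rightarrow> 'k)" using hv by blast
    then show ?thesis using old_supp[of l x] hx by blast
  qed
  have s4: "v x = 0" if hv: "v \<in> ((\<lambda>l. Fm (rho l)) ` NEW :: (_ \<Rightarrow> 'k) set)" and hx: "x \<in> POLD" for v x
  proof -
    obtain l where l: "l \<in> NEW" "v = (Fm (rho l) :: _ \<Rightarrow> 'k)" using hv by blast
    then show ?thesis using new_supp[of l x] hx by blast
  qed
  have "fs.dim ((\<lambda>l. Fm (rho l)) ` CA \<union> (\<lambda>l. Fm (rho l)) ` NEW :: (_ \<Rightarrow> 'k) set)
     = fs.dim ((\<lambda>l. Fm (rho l)) ` CA :: (_ \<Rightarrow> 'k) set) + fs.dim ((\<lambda>l. Fm (rho l)) ` NEW :: (_ \<Rightarrow> 'k) set)"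
    by (rule dim_union_supp[where P=POLD]) (use finCA finNEW s3 s4 in auto)
  moreover have "fs.dim (chiB ` (g ` Q0) \<union> ((\<lambda>l. Fm (rho l)) ` CA \<union> (\<lambda>l. Fm (rho l)) ` NEW) :: (_ \<Rightarrow> 'k) set)
     = fs.dim (chiB ` (g ` Q0) :: (_ \<Rightarrow> 'k) set) + fs.dim ((\<lambda>l. Fm (rho l)) ` CA \<union> (\<lambda>l. Fm (rho l)) ` NEW :: (_ \<Rightarrow> 'k) set)"
    by (rule dim_union_supp[where P=L1]) (use quiv(1) finCA finNEW s1 s2 in auto)
  ultimately show ?thesis unfolding imgB by simp
qed

lemma dOld: "fs.dim ((\<lambda>l. Fm (rho l)) ` CA :: (_ \<Rightarrow> 'k::field) set) = fs.dim (rho ` CA :: (_ \<Rightarrow> 'k) set)"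
proof -
  have eq: "(\<lambda>l. Fm (rho l)) ` CA = (\<lambda>f y. if DD y then f (hh y) else (0::'k)) ` (rho ` CA)"
    by (simp add: image_image Fm_eq)
  have supp: "x \<in> hh ` Collect DD" if v: "v \<in> (rho ` CA :: (_ \<Rightarrow> 'k) set)" and x: "v x \<noteq> 0" for v x
  proof -
    obtain l where l: "l \<in> CA" "v = (rho l :: _ \<Rightarrow> 'k)" using v by blast
    then have ln: "l \<noteq> []" using bp_ne by (auto simp: CA_def)
    have "(rho l x :: 'k) \<noteq> 0" using x l by simp
    then obtain a l' where "x = (a,(s (hd l'), l'))" "l' \<noteq> []" using rho_supp[OF ln] by blast
    then show ?thesis using canon_in by blast
  qed
  have "fs.dim ((\<lambda>f y. if DD y then f (hh y) else (0::'k)) ` (rho ` CA)) = fs.dim (rho ` CA :: (_ \<Rightarrow> 'k) set)"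
    by (rule dim_push) (rule supp)
  then show ?thesis using eq by simp
qed

lemma dVert: "fs.dim (chiB ` (g ` Q0) :: (_ \<Rightarrow> 'k::field) set) = fs.dim (chi' ` (Q0 - {vn}) :: (_ \<Rightarrow> 'k) set)"
proof -
  have "(chiB ` (g ` Q0) :: (_ \<Rightarrow> 'k) set) = (\<lambda>v. Fm (chi' v)) ` (Q0 - {vn})"
    unfolding gQ0
  proof (rule image_cong[OF refl])
    fix v assume v: "v \<in> Q0 - {vn}"
    show "(chiB v :: _ \<Rightarrow> 'k) = Fm (chi' v)"
    proof (cases "v = v1")
      case True then show ?thesis by (simp add: chiB_Fm1 chi'_def)
    next
      case False then show ?thesis using v by (simp add: chiB_Fm chi'_def)
    qed
  qed
  also have "\<dots> = (\<lambda>f y. if DD y then f (hh y) else (0::'k)) ` (chi' ` (Q0 - {vn}))"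
    by (simp add: image_image Fm_eq)
  finally have eq: "(chiB ` (g ` Q0) :: (_ \<Rightarrow> 'k) set) = (\<lambda>f y. if DD y then f (hh y) else (0::'k)) ` (chi' ` (Q0 - {vn}))" .
  have "fs.dim ((\<lambda>f y. if DD y then f (hh y) else (0::'k)) ` (chi' ` (Q0 - {vn}))) = fs.dim (chi' ` (Q0 - {vn}) :: (_ \<Rightarrow> 'k) set)"
  proof (rule dim_push)
    fix v x assume v: "v \<in> (chi' ` (Q0 - {vn}) :: (_ \<Rightarrow> 'k) set)" and x: "v x \<noteq> 0"
    obtain u where u: "v = chi' u" using v by blast
    have "\<exists>w. (chi w x :: 'k) \<noteq> 0"
    proof (cases "u = v1")
      case True
      then have "(chi v1 x :: 'k) + chi vn x \<noteq> 0" using x u by (simp add: chi'_def)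
      then show ?thesis by (metis add.left_neutral)
    next
      case False then show ?thesis using x u by (auto simp: chi'_def)
    qed
    then obtain w where "(chi w x :: 'k) \<noteq> 0" by blast
    then obtain a l' where "x = (a,(s (hd l'), l'))" "l' \<noteq> []" using chi_supp by blast
    then show "x \<in> hh ` Collect DD" using canon_in by blast
  qed
  then show ?thesis using eq by simp
qed

definition NZ where "NZ = {l \<in> NEW. (Fm (rho l) :: _ \<Rightarrow> int) \<noteq> 0}"

lemma NEW_g: "l \<in> NEW \<Longrightarrow> g (s (hd l)) = v1 \<and> ((s (hd l) = v1 \<and> t (last l) = vn) \<or> (s (hd l) = vn \<and> t (last l) = v1))"
  using g_eq[of "t (last l)" "s (hd l)"] neq unfolding NEW_def by (auto simp: glue_def)

lemma NEW_char: "bp l \<Longrightarrow> ((s (hd l) = v1 \<and> t (last l) = vn) \<or> (s (hd l) = vn \<and> t (last l) = v1)) \<longleftrightarrow> l \<in> NEW"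
  using neq unfolding NEW_def by (auto simp: glue_def)

lemma special_eq: "special_paths Q0 Q1 s t Z v1 vn = (\<lambda>l. (s (hd l), l)) ` NZ"
proof (rule set_eqI)
  fix p :: "'v \<times> 'e list"
  obtain w l where p: "p = (w,l)" by (cases p) auto
  show "p \<in> special_paths Q0 Q1 s t Z v1 vn \<longleftrightarrow> p \<in> (\<lambda>l. (s (hd l), l)) ` NZ"
  proof (cases "l = []")
    case True
    have "p \<notin> special_paths Q0 Q1 s t Z v1 vn" using True p neq by (auto simp: special_paths_def tgt_nil)
    moreover have "p \<notin> (\<lambda>l. (s (hd l), l)) ` NZ" using True p bp_ne by (auto simp: NZ_def NEW_def)
    ultimately show ?thesis by blast
  next
    case False
    have L: "p \<in> special_paths Q0 Q1 s t Z v1 vn \<longleftrightarrow> w = s (hd l) \<and> bp l \<and>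
       ((s (hd l) = v1 \<and> t (last l) = vn) \<or> (s (hd l) = vn \<and> t (last l) = v1)) \<and>
       (delta0 (g ` Q0) Q1 (g \<circ> s) (g \<circ> t) ZB (v1, (v1, l)) :: _ \<Rightarrow> int) \<noteq> 0"
      using False by (auto simp: special_paths_def p BA_cons tgt_cons)
    have R: "p \<in> (\<lambda>l. (s (hd l), l)) ` NZ \<longleftrightarrow> w = s (hd l) \<and> l \<in> NZ" by (auto simp: p)
    show ?thesis
    proof
      assume "p \<in> special_paths Q0 Q1 s t Z v1 vn"
      then have a: "w = s (hd l)" "bp l" "(s (hd l) = v1 \<and> t (last l) = vn) \<or> (s (hd l) = vn \<and> t (last l) = v1)"
        "(delta0 (g ` Q0) Q1 (g \<circ> s) (g \<circ> t) ZB (v1, (v1, l)) :: _ \<Rightarrow> int) \<noteq> 0" using L by blast+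
      have ln: "l \<in> NEW" using NEW_char[OF a(2)] a(3) by blast
      have "(delta0 (g ` Q0) Q1 (g \<circ> s) (g \<circ> t) ZB (v1, (v1, l)) :: _ \<Rightarrow> int) = Fm (rho l)"
        using dB_cyc[of l] ln NEW_g[OF ln] unfolding NEW_def by auto
      then have "l \<in> NZ" using a(4) ln by (simp add: NZ_def)
      then show "p \<in> (\<lambda>l. (s (hd l), l)) ` NZ" using R a(1) by blast
    next
      assume "p \<in> (\<lambda>l. (s (hd l), l)) ` NZ"
      then have a: "w = s (hd l)" "l \<in> NZ" using R by blast+
      then have ln: "l \<in> NEW" and nz: "(Fm (rho l) :: _ \<Rightarrow> int) \<noteq> 0" by (auto simp: NZ_def)
      have b: "bp l" using ln by (simp add: NEW_def)
      have "(delta0 (g ` Q0) Q1 (g \<circ> s) (g \<circ> t) ZB (v1, (v1, l)) :: _ \<Rightarrow> int) = Fm (rho l)"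
        using dB_cyc[of l] ln NEW_g[OF ln] unfolding NEW_def by auto
      then show "p \<in> special_paths Q0 Q1 s t Z v1 vn" using L a(1) b NEW_char[OF b] ln nz by auto
    qed
  qed
qed

lemma dNew: "fs.dim ((\<lambda>l. Fm (rho l)) ` NEW :: (_ \<Rightarrow> 'k::field) set) = card (special_paths Q0 Q1 s t Z v1 vn)"
proof -
  let ?T = "(\<lambda>l. Fm (rho l)) ` NEW :: (_ \<Rightarrow> 'k) set"
  have c1: "card (special_paths Q0 Q1 s t Z v1 vn) = card NZ"
    unfolding special_eq by (rule card_image) (auto simp: inj_on_def)
  have T0: "?T - {0} = (\<lambda>l. Fm (rho l)) ` NZ"
  proof -
    have "l \<in> NEW \<Longrightarrow> ((Fm (rho l) :: _ \<Rightarrow> 'k) \<noteq> 0) \<longleftrightarrow> ((Fm (rho l) :: _ \<Rightarrow> int) \<noteq> 0)" for l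
      using Fm_rho_nz[of l] bp_ne by (auto simp: NEW_def)
    then show ?thesis by (auto simp: NZ_def)
  qed
  have inj: "inj_on (\<lambda>l. Fm (rho l) :: _ \<Rightarrow> 'k) NZ"
  proof (rule inj_onI)
    fix l m assume l: "l \<in> NZ" and m: "m \<in> NZ" and eq: "(Fm (rho l) :: _ \<Rightarrow> 'k) = Fm (rho m)"
    show "l = m"
    proof (rule ccontr)
      assume lm: "l \<noteq> m"
      have "(Fm (rho l) :: _ \<Rightarrow> 'k) \<noteq> 0" using l T0 by blast
      then obtain y where y: "(Fm (rho l) y :: 'k) \<noteq> 0" by (auto simp: fun_eq_iff)
      have lN: "l \<in> NEW" "m \<in> NEW" using l m by (simp_all add: NZ_def)
      have "(Fm (rho l) y :: 'k) = 0 \<or> (Fm (rho m) y :: 'k) = 0"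
        by (rule new_disj[OF lN lm])
      then show False using y eq by simp
    qed
  qed
  have spT: "fs.span (?T - {0}) = fs.span ?T"
  proof (cases "0 \<in> ?T")
    case True
    have "fs.span (insert 0 (?T - {0})) = fs.span (?T - {0})" by (rule fs.span_redundant[OF fs.span_zero])
    moreover have "insert 0 (?T - {0}) = ?T" using True by blast
    ultimately show ?thesis by simp
  next
    case False then show ?thesis by simp
  qed
  have "fs.dim ?T = fs.dim (?T - {0})" using fs.span_eq_dim[OF spT] by simp
  also have "\<dots> = card (?T - {0})"
  proof (rule dim_disj)
    show "0 \<notin> ?T - {0}" by simp
    fix u w x assume u: "u \<in> ?T - {0}" and w: "w \<in> ?T - {0}" and uw: "u \<noteq> w"
    obtain l where l: "l \<in> NEW" "u = Fm (rho l)" using u by blast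
    obtain m where m: "m \<in> NEW" "w = Fm (rho m)" using w by blast
    have "l \<noteq> m" using uw l m by blast
    then show "u x = 0 \<or> w x = 0" using new_disj[OF l(1) m(1)] l m by blast
  qed
  also have "\<dots> = card NZ" unfolding T0 by (rule card_image[OF inj])
  finally show ?thesis using c1 by simp
qed

lemma sp0: "(v1,vn) \<notin> R \<Longrightarrow> card (special_paths Q0 Q1 s t Z v1 vn) = 0"
proof -
  assume nc: "(v1,vn) \<notin> R"
  have "NEW = {}"
  proof (rule ccontr)
    assume "NEW \<noteq> {}"
    then obtain l where l: "l \<in> NEW" by blast
    then have "(s (hd l), t (last l)) \<in> R" using bp_conn by (simp add: NEW_def)
    then show False using NEW_g[OF l] nc R_sym by blast
  qed
  then show ?thesis unfolding special_eq NZ_def by simp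
qed

lemma main_GS:
  fixes K :: "'k::field itself"
  shows "int (dim_im_delta0 K Q0 Q1 s t Z)
           = int (dim_im_delta0 K (g ` Q0) Q1 (g \<circ> s) (g \<circ> t) ZB) + 1 + int (ncomp (g ` Q0) Q1 (g \<circ> s) (g \<circ> t))
             - int (ncomp Q0 Q1 s t) - int (card (special_paths Q0 Q1 s t Z v1 vn))
         \<and> ((v1, vn) \<in> R \<longrightarrow>
           int (dim_im_delta0 K Q0 Q1 s t Z)
           = int (dim_im_delta0 K (g ` Q0) Q1 (g \<circ> s) (g \<circ> t) ZB) + 1
             - int (card (special_paths Q0 Q1 s t Z v1 vn)))
         \<and> ((v1, vn) \<notin> R \<longrightarrow>
           dim_im_delta0 K Q0 Q1 s t Z = dim_im_delta0 K (g ` Q0) Q1 (g \<circ> s) (g \<circ> t) ZB)"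
proof -
  have A: "dim_im_delta0 K Q0 Q1 s t Z = fs.dim (chi ` Q0 :: (_ \<Rightarrow> 'k) set) + fs.dim (rho ` CA :: (_ \<Rightarrow> 'k) set)"
    unfolding dim_im_delta0_def by (rule dimA)
  have B: "dim_im_delta0 K (g ` Q0) Q1 (g \<circ> s) (g \<circ> t) ZB
     = fs.dim (chi' ` (Q0 - {vn}) :: (_ \<Rightarrow> 'k) set) + fs.dim (rho ` CA :: (_ \<Rightarrow> 'k) set)
       + card (special_paths Q0 Q1 s t Z v1 vn)"
    unfolding dim_im_delta0_def dimB dVert dOld dNew by simp
  have V: "fs.dim (chi ` Q0 :: (_ \<Rightarrow> 'k) set)
     = fs.dim (chi' ` (Q0 - {vn}) :: (_ \<Rightarrow> 'k) set) + (if (v1,vn) \<in> R then 1 else 0)"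
    by (rule dim_vertex)
  show ?thesis
  proof (cases "(v1,vn) \<in> R")
    case True
    then show ?thesis using A B V ncomp_conn[OF True] by simp
  next
    case False
    then show ?thesis using A B V ncomp_nconn[OF False] sp0[OF False] by simp
  qed
qed

end

theorem proposition3p9:
  fixes K :: "'k::field itself"
    and Q0 :: "'v set" and Q1 :: "'e set" and s t :: "'e \<Rightarrow> 'v"
    and Z :: "('v, 'e) path set" and v1 vn :: 'v
  assumes "monomial_presentation Q0 Q1 s t Z"
    and "v1 \<in> Q0" and "vn \<in> Q0" and "v1 \<noteq> vn"
    and "\<exists>a\<in>Q1. s a = v1 \<or> t a = v1"
    and "\<exists>a\<in>Q1. s a = vn \<or> t a = vn"
  defines "sB \<equiv> glue v1 vn \<circ> s" and "tB \<equiv> glue v1 vn \<circ> t"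
    and "Q0B \<equiv> glue v1 vn ` Q0" and "ZB \<equiv> glue_rels Q1 s t Z v1 vn"
  shows "int (dim_im_delta0 K Q0 Q1 s t Z)
           = int (dim_im_delta0 K Q0B Q1 sB tB ZB) + 1 + int (ncomp Q0B Q1 sB tB)
             - int (ncomp Q0 Q1 s t) - int (card (special_paths Q0 Q1 s t Z v1 vn))
         \<and> ((v1, vn) \<in> conn_rel Q1 s t \<longrightarrow>
           int (dim_im_delta0 K Q0 Q1 s t Z)
           = int (dim_im_delta0 K Q0B Q1 sB tB ZB) + 1
             - int (card (special_paths Q0 Q1 s t Z v1 vn)))
         \<and> ((v1, vn) \<notin> conn_rel Q1 s t \<longrightarrow>
           dim_im_delta0 K Q0 Q1 s t Z = dim_im_delta0 K Q0B Q1 sB tB ZB)"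
proof -
  interpret GS Q0 Q1 s t Z v1 vn
    by unfold_locales (use assms in auto)
  show ?thesis unfolding assms(7-10) by (rule main_GS)
qed

end
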